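(* Let $G$ be a finite group, $N\trianglelefteq G$, $\widetilde{G}\leq G$ and $H\leq G$. Set $M:=N\cap H$, $\widetilde{H}:=\widetilde{G}\cap H$, $\widetilde{M}:=\widetilde{G}\cap M$ and $\widetilde{N}:=\widetilde{G}\cap N$, and assume $G=NH$, $H=\widetilde{H}M$ and $\mathbf{C}_G(N)\leq H$. Let $\widetilde{\vartheta}\in\mathrm{Irr}(\widetilde{N})$ and $\widetilde{\varphi}\in\mathrm{Irr}(\widetilde{M})$ be such that $\vartheta:=\widetilde{\vartheta}^{N}\in\mathrm{Irr}(N)$, $\varphi:=\widetilde{\varphi}^{M}\in\mathrm{Irr}(M)$ and $(\widetilde{G},\widetilde{N},\widetilde{\vartheta})\geq_c(\widetilde{H},\widetilde{M},\widetilde{\varphi})$. Assume that for every $N\leq J\leq G$, with $\widetilde{J}:=J\cap\widetilde{G}$, induction of characters gives bijections $\mathrm{Irr}(\widetilde{J}\mid\widetilde{\vartheta})\to\mathrm{Irr}(J\mid\vartheta)$ and $\mathrm{Irr}(\widetilde{J}\cap H\mid\widetilde{\varphi})\to\mathrm{Irr}(J\cap H\mid\varphi)$. Then $(G,N,\vartheta)\geq_c(H,M,\varphi)$.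
   Context: $\mathrm{Irr}(X\mid\theta)$ denotes the set of irreducible characters of $X$ whose restriction to the normal subgroup on which $\theta$ is defined has $\theta$ as a constituent; $\psi^X$ denotes induction. Character triples and $\geq_c$: a character triple $(G,N,\vartheta)$ consists of $N\trianglelefteq G$ and a $G$-invariant $\vartheta\in\mathrm{Irr}(N)$. A projective representation of $G$ associated with $\vartheta$ is a map $\mathcal{P}:G\to\mathrm{GL}_{\vartheta(1)}(\mathbb{C})$ with $\mathcal{P}(x)\mathcal{P}(y)=\alpha(x,y)\mathcal{P}(xy)$ for a factor set $\alpha$, such that $\mathcal{P}|_N$ is a representation affording $\vartheta$ and $\mathcal{P}(xn)=\mathcal{P}(x)\mathcal{P}(n)$, $\mathcal{P}(nx)=\mathcal{P}(n)\mathcal{P}(x)$ for $x\in G,n\in N$. One writes $(G,N,\vartheta)\geq_c(H,M,\varphi)$ for character triples if $G=NH$, $M=N\cap H$, $\mathbf{C}_G(N)\leq H$, and there are projective representations $\mathcal{P}$ of $G$ associated with $\vartheta$ and $\mathcal{P}'$ of $H$ associated with $\varphi$, with factor sets $\alpha,\alpha'$, such that $\alpha|_{H\times H}=\alpha'$ and for every $c\in\mathbf{C}_G(N)$ the matrices $\mathcal{P}(c)$, $\mathcal{P}'(c)$ are scalar with the same scalar. *)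

theory Defs
  imports "HOL-Algebra.Coset" "Jordan_Normal_Form.Matrix" Complex_Main
begin

(* All groups are subgroups (given as carrier subsets) of an ambient HOL-Algebra group G.
   Class functions / characters of a subgroup H are functions 'a => complex that vanish
   outside H. *)

definition mat_trace :: "complex mat \<Rightarrow> complex" where
  "mat_trace A = (\<Sum>i<dim_row A. A $$ (i,i))"

(* a (matrix) representation of degree n of the subgroup H of G (n = 0 allowed) *)
definition is_rep :: "('a,'b) monoid_scheme \<Rightarrow> 'a set \<Rightarrow> nat \<Rightarrow> ('a \<Rightarrow> complex mat) \<Rightarrow> bool" where
  "is_rep G H n \<rho> \<longleftrightarrow>
     (\<forall>h\<in>H. \<rho> h \<in> carrier_mat n n) \<and> \<rho> \<one>\<^bsub>G\<^esub> = 1\<^sub>m n \<and>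
     (\<forall>x\<in>H. \<forall>y\<in>H. \<rho> (x \<otimes>\<^bsub>G\<^esub> y) = \<rho> x * \<rho> y)"

(* irreducible: nonzero degree and no proper nontrivial invariant subspace,
   i.e. not simultaneously conjugate to block upper triangular form *)
definition irreducible_rep :: "('a,'b) monoid_scheme \<Rightarrow> 'a set \<Rightarrow> nat \<Rightarrow> ('a \<Rightarrow> complex mat) \<Rightarrow> bool" where
  "irreducible_rep G H n \<rho> \<longleftrightarrow> is_rep G H n \<rho> \<and> n > 0 \<and>
     \<not> (\<exists>P Q k. P \<in> carrier_mat n n \<and> Q \<in> carrier_mat n n \<and> P * Q = 1\<^sub>m n \<and> Q * P = 1\<^sub>m n \<and>
           0 < k \<and> k < n \<and>
           (\<forall>h\<in>H. \<forall>i j. k \<le> i \<longrightarrow> i < n \<longrightarrow> j < k \<longrightarrow> (Q * \<rho> h * P) $$ (i,j) = 0))"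

definition affords :: "'a set \<Rightarrow> ('a \<Rightarrow> complex mat) \<Rightarrow> ('a \<Rightarrow> complex) \<Rightarrow> bool" where
  "affords H \<rho> \<chi> \<longleftrightarrow> (\<forall>x. \<chi> x = (if x \<in> H then mat_trace (\<rho> x) else 0))"

(* characters (including the zero character) of H *)
definition Char :: "('a,'b) monoid_scheme \<Rightarrow> 'a set \<Rightarrow> ('a \<Rightarrow> complex) set" where
  "Char G H = {\<chi>. \<exists>n \<rho>. is_rep G H n \<rho> \<and> affords H \<rho> \<chi>}"

definition Irr :: "('a,'b) monoid_scheme \<Rightarrow> 'a set \<Rightarrow> ('a \<Rightarrow> complex) set" where
  "Irr G H = {\<chi>. \<exists>n \<rho>. irreducible_rep G H n \<rho> \<and> affords H \<rho> \<chi>}"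

(* Irr(X | \<theta>) for \<theta> a character of the subgroup N: \<theta> is a constituent of \<chi>|_N *)
definition Irr_over :: "('a,'b) monoid_scheme \<Rightarrow> 'a set \<Rightarrow> 'a set \<Rightarrow> ('a \<Rightarrow> complex) \<Rightarrow> ('a \<Rightarrow> complex) set" where
  "Irr_over G X N \<theta> = {\<chi> \<in> Irr G X. \<exists>\<psi> \<in> Char G N. \<forall>n\<in>N. \<chi> n = \<theta> n + \<psi> n}"

definition induce :: "('a,'b) monoid_scheme \<Rightarrow> 'a set \<Rightarrow> 'a set \<Rightarrow> ('a \<Rightarrow> complex) \<Rightarrow> 'a \<Rightarrow> complex" where
  "induce G H X \<psi> x = (if x \<in> X then
      (\<Sum>y\<in>X. (if y \<otimes>\<^bsub>G\<^esub> x \<otimes>\<^bsub>G\<^esub> inv\<^bsub>G\<^esub> y \<in> H then \<psi> (y \<otimes>\<^bsub>G\<^esub> x \<otimes>\<^bsub>G\<^esub> inv\<^bsub>G\<^esub> y) else 0)) / of_nat (card H)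
    else 0)"

definition centralizer_in :: "('a,'b) monoid_scheme \<Rightarrow> 'a set \<Rightarrow> 'a set \<Rightarrow> 'a set" where
  "centralizer_in G K N = {g \<in> K. \<forall>n\<in>N. g \<otimes>\<^bsub>G\<^esub> n = n \<otimes>\<^bsub>G\<^esub> g}"

definition char_triple :: "('a,'b) monoid_scheme \<Rightarrow> 'a set \<Rightarrow> 'a set \<Rightarrow> ('a \<Rightarrow> complex) \<Rightarrow> bool" where
  "char_triple G K N \<theta> \<longleftrightarrow> subgroup K G \<and> normal N (G\<lparr>carrier := K\<rparr>) \<and> \<theta> \<in> Irr G N \<and>
     (\<forall>k\<in>K. \<forall>n\<in>N. \<theta> (k \<otimes>\<^bsub>G\<^esub> n \<otimes>\<^bsub>G\<^esub> inv\<^bsub>G\<^esub> k) = \<theta> n)"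

definition proj_rep :: "('a,'b) monoid_scheme \<Rightarrow> 'a set \<Rightarrow> 'a set \<Rightarrow> ('a \<Rightarrow> complex)
     \<Rightarrow> ('a \<Rightarrow> complex mat) \<Rightarrow> ('a \<Rightarrow> 'a \<Rightarrow> complex) \<Rightarrow> bool" where
  "proj_rep G K N \<theta> P \<alpha> \<longleftrightarrow> (\<exists>d. of_nat d = \<theta> \<one>\<^bsub>G\<^esub> \<and>
     (\<forall>x\<in>K. P x \<in> carrier_mat d d \<and> invertible_mat (P x)) \<and>
     (\<forall>x\<in>K. \<forall>y\<in>K. P x * P y = \<alpha> x y \<cdot>\<^sub>m P (x \<otimes>\<^bsub>G\<^esub> y)) \<and>
     is_rep G N d P \<and> affords N P \<theta> \<and>
     (\<forall>x\<in>K. \<forall>n\<in>N. P (x \<otimes>\<^bsub>G\<^esub> n) = P x * P n \<and> P (n \<otimes>\<^bsub>G\<^esub> x) = P n * P x))"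

definition ge_c :: "('a,'b) monoid_scheme \<Rightarrow> 'a set \<Rightarrow> 'a set \<Rightarrow> ('a \<Rightarrow> complex)
     \<Rightarrow> 'a set \<Rightarrow> 'a set \<Rightarrow> ('a \<Rightarrow> complex) \<Rightarrow> bool" where
  "ge_c G K N \<theta> H M \<phi> \<longleftrightarrow> char_triple G K N \<theta> \<and> char_triple G H M \<phi> \<and> H \<subseteq> K \<and>
     K = N <#>\<^bsub>G\<^esub> H \<and> M = N \<inter> H \<and> centralizer_in G K N \<subseteq> H \<and>
     (\<exists>P \<alpha> P' \<alpha>'. proj_rep G K N \<theta> P \<alpha> \<and> proj_rep G H M \<phi> P' \<alpha>' \<and>
        (\<forall>x\<in>H. \<forall>y\<in>H. \<alpha> x y = \<alpha>' x y) \<and>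
        (\<forall>c\<in>centralizer_in G K N. \<exists>z d d'. P c = z \<cdot>\<^sub>m 1\<^sub>m d \<and> P' c = z \<cdot>\<^sub>m 1\<^sub>m d'))"

end

theory Submission
  imports Defs "Jordan_Normal_Form.Gauss_Jordan_Elimination" "Jordan_Normal_Form.Spectral_Radius"
begin


lemma mult_entry: "A \<in> carrier_mat n m \<Longrightarrow> B \<in> carrier_mat m p \<Longrightarrow> i < n \<Longrightarrow> j < p \<Longrightarrow>
  (A * B) $$ (i,j) = (\<Sum>l<m. A $$ (i,l) * B $$ (l,j))"
  by (simp add: index_mult_mat scalar_prod_def lessThan_atLeast0 row_def col_def)

lemma irr_invariant:
  fixes R :: "'a \<Rightarrow> complex mat"
  assumes irr: "irreducible_rep G H d R" and A: "A \<in> carrier_mat d d"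
    and inv: "\<forall>h\<in>H. \<exists>B\<in>carrier_mat d d. R h * A = A * B"
    and nz: "A \<noteq> 0\<^sub>m d d"
  shows "det A \<noteq> 0"
proof
  assume detA: "det A = 0"
  define C where "C = gauss_jordan_single A"
  note gj = gauss_jordan_single[OF A C_def[symmetric]]
  from gj(4) obtain P Q where CPA: "C = P * A" and P: "P \<in> carrier_mat d d" and Q: "Q \<in> carrier_mat d d"
    and PQ: "P * Q = 1\<^sub>m d" and QP: "Q * P = 1\<^sub>m d" by blast
  have C: "C \<in> carrier_mat d d" by fact
  from gj(3) obtain f where pf: "pivot_fun C f d" unfolding row_echelon_form_def using C by auto
  note pD = pivot_funD[OF _ pf, of d]
  have dr: "dim_row C = d" using C by auto
  note p1 = pD(1)[OF dr] and p2 = pD(2)[OF dr] and p3 = pD(3)[OF dr] and p4 = pD(4)[OF dr] and p5 = pD(5)[OF dr]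
  define k where "k = (LEAST i. i = d \<or> (i < d \<and> f i = d))"
  have kd: "k \<le> d" unfolding k_def by (rule Least_le) simp
  have kprop: "k = d \<or> (k < d \<and> f k = d)" unfolding k_def by (rule LeastI[of _ d]) simp
  have Z: "f i = d" if "k \<le> i" "i < d" for i
    using that
  proof (induction i rule: dec_induct)
    case base then show ?case using kprop by auto
  next
    case (step i)
    then have "f i = d" by auto
    with p3[of i] p1[of "Suc i"] step show ?case by auto
  qed
  have NZ: "f i < d" if "i < k" for i
  proof -
    have "\<not> (i = d \<or> (i < d \<and> f i = d))" using not_less_Least[of i] that unfolding k_def by blast
    with that kd p1[of i] show ?thesis by auto
  qed
  have rowz: "C $$ (i,j) = 0" if "k \<le> i" "i < d" "j < d" for i j
    using p2[of i j] Z[OF that(1,2)] that by auto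
  have "k > 0"
  proof (rule ccontr)
    assume "\<not> 0 < k"
    then have "C = 0\<^sub>m d d" using rowz C by (intro eq_matI) auto
    then have "Q * C = 0\<^sub>m d d" using Q by simp
    moreover have "Q * C = A" unfolding CPA using Q P A
      by (metis QP assoc_mult_mat left_mult_one_mat)
    ultimately show False using nz by simp
  qed
  moreover have "k < d"
  proof (rule ccontr)
    assume "\<not> k < d"
    then have kd': "k = d" using kd by auto
    have mono: "f i + j \<le> f (i + j)" if "i + j < d" for i j
      using that
    proof (induction j)
      case 0 then show ?case by simp
    next
      case (Suc j)
      then have "f (i+j) < f (Suc (i+j))" using p3[of "i+j"] NZ[of "Suc (i+j)"] kd' by auto
      with Suc show ?case by auto
    qed
    have fi: "f i = i" if "i < d" for i
    proof -
      have "f 0 + i \<le> f i" using mono[of 0 i] that by simp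
      moreover have "f i + (d - 1 - i) \<le> f (d - 1)" using mono[of i "d-1-i"] that by simp
      moreover have "f (d-1) < d" using NZ[of "d-1"] kd' that by auto
      ultimately show ?thesis using that by linarith
    qed
    have "C = 1\<^sub>m d"
    proof (rule eq_matI)
      fix i j assume ij: "i < dim_row (1\<^sub>m d)" "j < dim_col (1\<^sub>m d)"
      then show "C $$ (i,j) = 1\<^sub>m d $$ (i,j)"
        using p4[of j] p5[of j i] fi[of j] kd' NZ[of j] by (cases "i = j") auto
    qed (use C in auto)
    then have "det C = 1" by simp
    moreover have "det C = 0" unfolding CPA using det_mult[OF P A] detA by simp
    ultimately show False by simp
  qed
  moreover have "\<forall>h\<in>H. \<forall>i j. k \<le> i \<longrightarrow> i < d \<longrightarrow> j < k \<longrightarrow> (P * R h * Q) $$ (i,j) = 0"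
  proof (intro ballI allI impI)
    fix h i j assume h: "h \<in> H" and i: "k \<le> i" "i < d" and j: "j < k"
    from inv h obtain B where B: "B \<in> carrier_mat d d" and RAB: "R h * A = A * B" by auto
    have Rh: "R h \<in> carrier_mat d d" using irr h unfolding irreducible_rep_def is_rep_def by auto
    have PRQ: "P * R h * Q \<in> carrier_mat d d" using P Q Rh by auto
    have jd: "j < d" using j kd by auto
    have fj: "f j < d" using NZ[OF j] .
    have eq: "P * R h * Q * C = C * B"
    proof -
      have "P * R h * Q * C = P * R h * (Q * P) * A"
        unfolding CPA using P Q Rh A by (simp add: assoc_mult_mat[of _ d d _ d _ d])
      also have "\<dots> = P * (R h * A)" using P Q Rh A QP by (simp add: assoc_mult_mat[of _ d d _ d _ d])
      also have "\<dots> = P * A * B" unfolding RAB using P A B by (simp add: assoc_mult_mat[of _ d d _ d _ d])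
      finally show ?thesis unfolding CPA .
    qed
    have "(P * R h * Q * C) $$ (i, f j) = (\<Sum>l<d. (P * R h * Q) $$ (i,l) * C $$ (l, f j))"
      by (rule mult_entry[OF PRQ C i(2) fj])
    also have "\<dots> = (\<Sum>l<d. if l = j then (P * R h * Q) $$ (i,l) else 0)"
      by (rule sum.cong, auto simp: p4[OF jd fj] p5[OF jd fj])
    also have "\<dots> = (P * R h * Q) $$ (i,j)" using jd by simp
    finally have "(P * R h * Q) $$ (i,j) = (C * B) $$ (i, f j)" unfolding eq by simp
    also have "\<dots> = (\<Sum>l<d. C $$ (i,l) * B $$ (l, f j))" by (rule mult_entry[OF C B i(2) fj])
    also have "\<dots> = 0" using rowz[OF i] by simp
    finally show "(P * R h * Q) $$ (i,j) = 0" .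
  qed
  ultimately show False using irr Q P PQ QP unfolding irreducible_rep_def by blast
qed



definition msum :: "nat \<Rightarrow> nat \<Rightarrow> ('g \<Rightarrow> complex mat) \<Rightarrow> 'g set \<Rightarrow> complex mat" where
  "msum n m F S = mat n m (\<lambda>(i,j). \<Sum>g\<in>S. F g $$ (i,j))"

lemma msum_carrier[simp]: "msum n m F S \<in> carrier_mat n m"
  unfolding msum_def by simp

lemma msum_dim[simp]: "dim_row (msum n m F S) = n" "dim_col (msum n m F S) = m"
  unfolding msum_def by auto

lemma msum_index: "i < n \<Longrightarrow> j < m \<Longrightarrow> msum n m F S $$ (i,j) = (\<Sum>g\<in>S. F g $$ (i,j))"
  unfolding msum_def by simp

lemma mult_msum_left:
  assumes A: "A \<in> carrier_mat n m" and F: "\<And>g. g \<in> S \<Longrightarrow> F g \<in> carrier_mat m p"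
  shows "A * msum m p F S = msum n p (\<lambda>g. A * F g) S"
proof (rule eq_matI)
  fix i j assume ij: "i < dim_row (msum n p (\<lambda>g. A * F g) S)" "j < dim_col (msum n p (\<lambda>g. A * F g) S)"
  then have i: "i < n" and j: "j < p" by auto
  have "(A * msum m p F S) $$ (i,j) = (\<Sum>l<m. A $$ (i,l) * (\<Sum>g\<in>S. F g $$ (l,j)))"
    unfolding mult_entry[OF A msum_carrier i j] by (intro sum.cong) (auto simp: msum_index j)
  also have "\<dots> = (\<Sum>g\<in>S. \<Sum>l<m. A $$ (i,l) * F g $$ (l,j))"
    by (simp add: sum_distrib_left sum.swap[of _ S])
  also have "\<dots> = (\<Sum>g\<in>S. (A * F g) $$ (i,j))"
    by (rule sum.cong, simp, subst mult_entry[OF A F i j], auto)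
  also have "\<dots> = msum n p (\<lambda>g. A * F g) S $$ (i,j)" by (rule msum_index[OF i j, symmetric])
  finally show "(A * msum m p F S) $$ (i,j) = msum n p (\<lambda>g. A * F g) S $$ (i,j)" .
qed (use A in auto)

lemma mult_msum_right:
  assumes A: "A \<in> carrier_mat m p" and F: "\<And>g. g \<in> S \<Longrightarrow> F g \<in> carrier_mat n m"
  shows "msum n m F S * A = msum n p (\<lambda>g. F g * A) S"
proof (rule eq_matI)
  fix i j assume ij: "i < dim_row (msum n p (\<lambda>g. F g * A) S)" "j < dim_col (msum n p (\<lambda>g. F g * A) S)"
  then have i: "i < n" and j: "j < p" by auto
  have "(msum n m F S * A) $$ (i,j) = (\<Sum>l<m. (\<Sum>g\<in>S. F g $$ (i,l)) * A $$ (l,j))"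
    unfolding mult_entry[OF msum_carrier A i j] by (intro sum.cong) (auto simp: msum_index i)
  also have "\<dots> = (\<Sum>g\<in>S. \<Sum>l<m. F g $$ (i,l) * A $$ (l,j))"
    by (simp add: sum_distrib_right sum.swap[of _ S])
  also have "\<dots> = (\<Sum>g\<in>S. (F g * A) $$ (i,j))"
    by (rule sum.cong, simp, subst mult_entry[OF F A i j], auto)
  also have "\<dots> = msum n p (\<lambda>g. F g * A) S $$ (i,j)" by (rule msum_index[OF i j, symmetric])
  finally show "(msum n m F S * A) $$ (i,j) = msum n p (\<lambda>g. F g * A) S $$ (i,j)" .
qed (use A in auto)

lemma msum_reindex:
  assumes "bij_betw h S T"
  shows "msum n m F T = msum n m (\<lambda>g. F (h g)) S"
proof (rule eq_matI)
  fix i j assume "i < dim_row (msum n m (\<lambda>g. F (h g)) S)" "j < dim_col (msum n m (\<lambda>g. F (h g)) S)"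
  then show "msum n m F T $$ (i,j) = msum n m (\<lambda>g. F (h g)) S $$ (i,j)"
    using sum.reindex_bij_betw[OF assms, of "\<lambda>g. F g $$ (i,j)"] by (simp add: msum_index)
qed auto

lemma mat_trace_comm:
  assumes A: "A \<in> carrier_mat n m" and B: "B \<in> carrier_mat m n"
  shows "mat_trace (A * B) = mat_trace (B * A)"
proof -
  have "mat_trace (A * B) = (\<Sum>i<n. (A * B) $$ (i,i))"
    unfolding mat_trace_def using A by simp
  also have "\<dots> = (\<Sum>i<n. \<Sum>l<m. A $$ (i,l) * B $$ (l,i))"
    by (intro sum.cong refl) (rule mult_entry[OF A B], auto)
  also have "\<dots> = (\<Sum>l<m. \<Sum>i<n. B $$ (l,i) * A $$ (i,l))"
    by (subst sum.swap) (simp add: mult.commute)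
  also have "\<dots> = (\<Sum>i<m. (B * A) $$ (i,i))"
    by (intro sum.cong refl) (rule mult_entry[OF B A, symmetric], auto)
  also have "\<dots> = mat_trace (B * A)"
    unfolding mat_trace_def using B by simp
  finally show ?thesis .
qed

lemma mat_trace_msum: "(\<And>g. g \<in> S \<Longrightarrow> F g \<in> carrier_mat n n) \<Longrightarrow> mat_trace (msum n n F S) = (\<Sum>g\<in>S. mat_trace (F g))"
  unfolding mat_trace_def by (auto simp: msum_index sum.swap[of _ S] intro!: sum.cong)

lemma irr_rep_carrier: "irreducible_rep G H d R \<Longrightarrow> h \<in> H \<Longrightarrow> R h \<in> carrier_mat d d"
  unfolding irreducible_rep_def is_rep_def by auto

lemma schur_scalar:
  fixes R :: "'a \<Rightarrow> complex mat"
  assumes irr: "irreducible_rep G H d R" and X: "X \<in> carrier_mat d d"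
    and comm: "\<forall>h\<in>H. R h * X = X * R h"
  shows "\<exists>c. X = c \<cdot>\<^sub>m 1\<^sub>m d"
proof -
  have d: "d > 0" using irr unfolding irreducible_rep_def by auto
  from spectrum_non_empty[OF X d] obtain c where "eigenvalue X c" unfolding spectrum_def by auto
  then have det: "det (char_matrix X c) = 0" using eigenvalue_det[OF X] by auto
  define A where "A = char_matrix X c"
  have A: "A \<in> carrier_mat d d" unfolding A_def char_matrix_def using X by auto
  have AX: "A = X + (-c) \<cdot>\<^sub>m 1\<^sub>m d" unfolding A_def char_matrix_def using X by auto
  have "\<forall>h\<in>H. \<exists>B\<in>carrier_mat d d. R h * A = A * B"
  proof
    fix h assume h: "h \<in> H"
    have Rh: "R h \<in> carrier_mat d d" using irr_rep_carrier[OF irr h] .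
    have "R h * A = R h * X + R h * ((-c) \<cdot>\<^sub>m 1\<^sub>m d)" unfolding AX
      using Rh X by (simp add: mult_add_distrib_mat)
    also have "\<dots> = X * R h + ((-c) \<cdot>\<^sub>m 1\<^sub>m d) * R h" using comm h Rh
      by (simp add: mult_smult_distrib[OF Rh one_carrier_mat] mult_smult_assoc_mat[OF one_carrier_mat Rh])
    also have "\<dots> = A * R h" unfolding AX using Rh X by (simp add: add_mult_distrib_mat)
    finally show "\<exists>B\<in>carrier_mat d d. R h * A = A * B" using Rh by blast
  qed
  from irr_invariant[OF irr A this] det have "A = 0\<^sub>m d d" unfolding A_def by blast
  then have A0: "X + (-c) \<cdot>\<^sub>m 1\<^sub>m d = 0\<^sub>m d d" unfolding AX .
  have "X = c \<cdot>\<^sub>m 1\<^sub>m d"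
  proof (rule eq_matI)
    fix i j assume ij: "i < dim_row (c \<cdot>\<^sub>m 1\<^sub>m d)" "j < dim_col (c \<cdot>\<^sub>m 1\<^sub>m d)"
    have "(X + (-c) \<cdot>\<^sub>m 1\<^sub>m d) $$ (i,j) = 0" unfolding A0 using ij by simp
    then show "X $$ (i,j) = (c \<cdot>\<^sub>m 1\<^sub>m d) $$ (i,j)" using ij X by (cases "i = j") auto
  qed (use X in auto)
  then show ?thesis by blast
qed



definition avg :: "('a,'b) monoid_scheme \<Rightarrow> 'a set \<Rightarrow> nat \<Rightarrow> nat \<Rightarrow> ('a \<Rightarrow> complex mat) \<Rightarrow> ('a \<Rightarrow> complex mat) \<Rightarrow> complex mat \<Rightarrow> complex mat" where
  "avg G H d0 d1 R0 R1 X = msum d0 d1 (\<lambda>g. R0 g * X * R1 (inv\<^bsub>G\<^esub> g)) H"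

lemma avg_carrier[simp]: "avg G H d0 d1 R0 R1 X \<in> carrier_mat d0 d1" unfolding avg_def by simp

context
  fixes G :: "('a,'b) monoid_scheme" and H :: "'a set"
  assumes grp: "group G" and sub: "subgroup H G"
begin

lemma rep_carrier: "is_rep G H d R \<Longrightarrow> h \<in> H \<Longrightarrow> R h \<in> carrier_mat d d"
  unfolding is_rep_def by auto

lemma rep_mult: "is_rep G H d R \<Longrightarrow> x \<in> H \<Longrightarrow> y \<in> H \<Longrightarrow> R (x \<otimes>\<^bsub>G\<^esub> y) = R x * R y"
  unfolding is_rep_def by auto

lemma rep_inv1: "is_rep G H d R \<Longrightarrow> g \<in> H \<Longrightarrow> R (inv\<^bsub>G\<^esub> g) * R g = 1\<^sub>m d"
proof -
  assume r: "is_rep G H d R" and g: "g \<in> H"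
  have gi: "inv\<^bsub>G\<^esub> g \<in> H" using sub g by (simp add: subgroup.m_inv_closed[OF sub])
  have "R (inv\<^bsub>G\<^esub> g) * R g = R (inv\<^bsub>G\<^esub> g \<otimes>\<^bsub>G\<^esub> g)" using rep_mult[OF r gi g] by simp
  also have "inv\<^bsub>G\<^esub> g \<otimes>\<^bsub>G\<^esub> g = \<one>\<^bsub>G\<^esub>" using g sub grp
    by (meson group.l_inv subgroup.mem_carrier)
  finally show ?thesis using r unfolding is_rep_def by simp
qed

lemma rep_inv2: "is_rep G H d R \<Longrightarrow> g \<in> H \<Longrightarrow> R g * R (inv\<^bsub>G\<^esub> g) = 1\<^sub>m d"
proof -
  assume r: "is_rep G H d R" and g: "g \<in> H"
  have gi: "inv\<^bsub>G\<^esub> g \<in> H" using sub g by (simp add: subgroup.m_inv_closed[OF sub])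
  have "R g * R (inv\<^bsub>G\<^esub> g) = R (g \<otimes>\<^bsub>G\<^esub> inv\<^bsub>G\<^esub> g)" using rep_mult[OF r g gi] by simp
  also have "g \<otimes>\<^bsub>G\<^esub> inv\<^bsub>G\<^esub> g = \<one>\<^bsub>G\<^esub>" using g sub grp
    by (meson group.r_inv subgroup.mem_carrier)
  finally show ?thesis using r unfolding is_rep_def by simp
qed


lemma avg_intertwines:
  assumes r0: "is_rep G H d0 R0" and r1: "is_rep G H d1 R1" and X: "X \<in> carrier_mat d0 d1" and h: "h \<in> H"
  shows "R0 h * avg G H d0 d1 R0 R1 X = avg G H d0 d1 R0 R1 X * R1 h"
proof -
  interpret G: group G by (rule grp)
  have hG: "h \<in> carrier G" using subgroup.mem_carrier[OF sub h] .
  have inH: "inv\<^bsub>G\<^esub> g \<in> H" if "g \<in> H" for g using that subgroup.m_inv_closed[OF sub] by simp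
  have mH: "x \<otimes>\<^bsub>G\<^esub> y \<in> H" if "x \<in> H" "y \<in> H" for x y using that subgroup.m_closed[OF sub] by simp
  have C0: "R0 g \<in> carrier_mat d0 d0" if "g \<in> H" for g using rep_carrier[OF r0 that] .
  have C1: "R1 g \<in> carrier_mat d1 d1" if "g \<in> H" for g using rep_carrier[OF r1 that] .
  have CF: "R0 g * X * R1 (inv\<^bsub>G\<^esub> g) \<in> carrier_mat d0 d1" if "g \<in> H" for g
    using mult_carrier_mat[OF mult_carrier_mat[OF C0[OF that] X] C1[OF inH[OF that]]] .
  have "R0 h * avg G H d0 d1 R0 R1 X = msum d0 d1 (\<lambda>g. R0 h * (R0 g * X * R1 (inv\<^bsub>G\<^esub> g))) H"
    unfolding avg_def by (rule mult_msum_left[OF C0[OF h]]) (use CF in auto)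
  also have "\<dots> = msum d0 d1 (\<lambda>g. R0 (h \<otimes>\<^bsub>G\<^esub> g) * X * R1 (inv\<^bsub>G\<^esub> g)) H"
  proof -
    have "R0 h * (R0 g * X * R1 (inv\<^bsub>G\<^esub> g)) = R0 (h \<otimes>\<^bsub>G\<^esub> g) * X * R1 (inv\<^bsub>G\<^esub> g)" if g: "g \<in> H" for g
      using rep_mult[OF r0 h g] C0[OF h] C0[OF g] C1[OF inH[OF g]] X
      by (simp add: assoc_mult_mat[of _ d0 d0 _ d0 _ d1] assoc_mult_mat[of _ d0 d0 _ d1 _ d1])
    then show ?thesis unfolding msum_def by (intro eq_matI) auto
  qed
  also have "\<dots> = msum d0 d1 (\<lambda>g. R0 g * X * R1 (inv\<^bsub>G\<^esub> g) * R1 h) H"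
  proof -
    have bij: "bij_betw (\<lambda>g. h \<otimes>\<^bsub>G\<^esub> g) H H"
    proof (rule bij_betwI[where g="\<lambda>g. inv\<^bsub>G\<^esub> h \<otimes>\<^bsub>G\<^esub> g"])
      show "(\<lambda>g. h \<otimes>\<^bsub>G\<^esub> g) \<in> H \<rightarrow> H" using mH h by auto
      show "(\<lambda>g. inv\<^bsub>G\<^esub> h \<otimes>\<^bsub>G\<^esub> g) \<in> H \<rightarrow> H" using mH inH h by auto
      show "inv\<^bsub>G\<^esub> h \<otimes>\<^bsub>G\<^esub> (h \<otimes>\<^bsub>G\<^esub> x) = x" if "x \<in> H" for x
        using subgroup.mem_carrier[OF sub that] hG G.m_assoc[symmetric] by simp
      show "h \<otimes>\<^bsub>G\<^esub> (inv\<^bsub>G\<^esub> h \<otimes>\<^bsub>G\<^esub> y) = y" if "y \<in> H" for y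
        using subgroup.mem_carrier[OF sub that] hG G.m_assoc[symmetric] by simp
    qed
    have eq: "R0 (h \<otimes>\<^bsub>G\<^esub> g) * X * R1 (inv\<^bsub>G\<^esub> (h \<otimes>\<^bsub>G\<^esub> g)) * R1 h = R0 (h \<otimes>\<^bsub>G\<^esub> g) * X * R1 (inv\<^bsub>G\<^esub> g)"
      if g: "g \<in> H" for g
    proof -
      have gG: "g \<in> carrier G" using subgroup.mem_carrier[OF sub g] .
      have "inv\<^bsub>G\<^esub> (h \<otimes>\<^bsub>G\<^esub> g) = inv\<^bsub>G\<^esub> g \<otimes>\<^bsub>G\<^esub> inv\<^bsub>G\<^esub> h"
        using group.inv_mult_group[OF grp hG gG] .
      then have "R1 (inv\<^bsub>G\<^esub> (h \<otimes>\<^bsub>G\<^esub> g)) * R1 h = R1 (inv\<^bsub>G\<^esub> g) * (R1 (inv\<^bsub>G\<^esub> h) * R1 h)"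
        using rep_mult[OF r1 inH[OF g] inH[OF h]] C1 inH g h
        by (simp add: assoc_mult_mat[of _ d1 d1 _ d1 _ d1])
      also have "\<dots> = R1 (inv\<^bsub>G\<^esub> g)" using rep_inv1[OF r1 h] C1[OF inH[OF g]] by simp
      finally have e: "R1 (inv\<^bsub>G\<^esub> (h \<otimes>\<^bsub>G\<^esub> g)) * R1 h = R1 (inv\<^bsub>G\<^esub> g)" .
      have "R0 (h \<otimes>\<^bsub>G\<^esub> g) * X * R1 (inv\<^bsub>G\<^esub> (h \<otimes>\<^bsub>G\<^esub> g)) * R1 h
          = R0 (h \<otimes>\<^bsub>G\<^esub> g) * X * (R1 (inv\<^bsub>G\<^esub> (h \<otimes>\<^bsub>G\<^esub> g)) * R1 h)"
        by (rule assoc_mult_mat[OF mult_carrier_mat[OF C0[OF mH[OF h g]] X] C1[OF inH[OF mH[OF h g]]] C1[OF h]])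
      then show ?thesis using e by simp
    qed
    have "msum d0 d1 (\<lambda>g. R0 g * X * R1 (inv\<^bsub>G\<^esub> g) * R1 h) H
       = msum d0 d1 (\<lambda>g. R0 (h \<otimes>\<^bsub>G\<^esub> g) * X * R1 (inv\<^bsub>G\<^esub> (h \<otimes>\<^bsub>G\<^esub> g)) * R1 h) H"
      by (rule msum_reindex[OF bij])
    also have "\<dots> = msum d0 d1 (\<lambda>g. R0 (h \<otimes>\<^bsub>G\<^esub> g) * X * R1 (inv\<^bsub>G\<^esub> g)) H"
      unfolding msum_def using eq by (intro eq_matI) auto
    finally show ?thesis by simp
  qed
  also have "\<dots> = avg G H d0 d1 R0 R1 X * R1 h"
    unfolding avg_def by (rule mult_msum_right[symmetric, OF C1[OF h]]) (use CF in auto)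
  finally show ?thesis .
qed

end



definition Emat :: "nat \<Rightarrow> nat \<Rightarrow> nat \<Rightarrow> nat \<Rightarrow> complex mat" where
  "Emat n m a b = mat n m (\<lambda>(i,j). if i = a \<and> j = b then 1 else 0)"

lemma Emat_carrier[simp]: "Emat n m a b \<in> carrier_mat n m" unfolding Emat_def by simp

lemma Emat_entry:
  assumes A: "A \<in> carrier_mat n d" and B: "B \<in> carrier_mat e m" and a: "a < d" and b: "b < e"
    and i: "i < n" and j: "j < m"
  shows "(A * Emat d e a b * B) $$ (i,j) = A $$ (i,a) * B $$ (b,j)"
proof -
  have AE: "A * Emat d e a b \<in> carrier_mat n e" using A by simp
  have ae: "(A * Emat d e a b) $$ (i,l) = (if l = b then A $$ (i,a) else 0)" if l: "l < e" for l
  proof -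
    have "(A * Emat d e a b) $$ (i,l) = (\<Sum>k<d. A $$ (i,k) * Emat d e a b $$ (k,l))"
      by (rule mult_entry[OF A Emat_carrier i l])
    also have "\<dots> = (\<Sum>k<d. if k = a then (if l = b then A $$ (i,a) else 0) else 0)"
      by (rule sum.cong) (use l in \<open>auto simp: Emat_def\<close>)
    also have "\<dots> = (if l = b then A $$ (i,a) else 0)" using a by simp
    finally show ?thesis .
  qed
  have "(A * Emat d e a b * B) $$ (i,j) = (\<Sum>l<e. (A * Emat d e a b) $$ (i,l) * B $$ (l,j))"
    by (rule mult_entry[OF AE B i j])
  also have "\<dots> = (\<Sum>l<e. if l = b then A $$ (i,a) * B $$ (b,j) else 0)"
    by (rule sum.cong) (auto simp: ae)
  also have "\<dots> = A $$ (i,a) * B $$ (b,j)" using b by simp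
  finally show ?thesis .
qed

lemma mat_trace_Emat: "a < d \<Longrightarrow> b < d \<Longrightarrow> mat_trace (Emat d d a b) = (if a = b then 1 else 0)"
  unfolding mat_trace_def Emat_def by (auto simp: sum.delta)

lemma mat_trace_smult_one: "mat_trace (c \<cdot>\<^sub>m 1\<^sub>m d) = c * of_nat d"
  unfolding mat_trace_def by simp

context
  fixes G :: "('a,'b) monoid_scheme" and H :: "'a set"
  assumes grp: "group G" and sub: "subgroup H G" and fin: "finite H"
begin

lemma avg_Emat_entry:
  assumes r0: "is_rep G H d0 R0" and r1: "is_rep G H d1 R1" and a: "a < d0" and b: "b < d1"
    and i: "i < d0" and j: "j < d1"
  shows "avg G H d0 d1 R0 R1 (Emat d0 d1 a b) $$ (i,j) = (\<Sum>g\<in>H. R0 g $$ (i,a) * R1 (inv\<^bsub>G\<^esub> g) $$ (b,j))"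
proof -
  have "avg G H d0 d1 R0 R1 (Emat d0 d1 a b) $$ (i,j) = (\<Sum>g\<in>H. (R0 g * Emat d0 d1 a b * R1 (inv\<^bsub>G\<^esub> g)) $$ (i,j))"
    unfolding avg_def by (rule msum_index[OF i j])
  also have "\<dots> = (\<Sum>g\<in>H. R0 g $$ (i,a) * R1 (inv\<^bsub>G\<^esub> g) $$ (b,j))"
    by (rule sum.cong[OF refl], rule Emat_entry[OF rep_carrier[OF grp sub r0] rep_carrier[OF grp sub r1] a b i j])
      (auto simp: subgroup.m_inv_closed[OF sub])
  finally show ?thesis .
qed

lemma sum_traces:
  assumes r0: "is_rep G H d0 R0" and r1: "is_rep G H d1 R1"
  shows "(\<Sum>a<d0. \<Sum>b<d1. avg G H d0 d1 R0 R1 (Emat d0 d1 a b) $$ (a,b))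
     = (\<Sum>g\<in>H. mat_trace (R0 g) * mat_trace (R1 (inv\<^bsub>G\<^esub> g)))"
proof -
  have "(\<Sum>a<d0. \<Sum>b<d1. avg G H d0 d1 R0 R1 (Emat d0 d1 a b) $$ (a,b))
      = (\<Sum>a<d0. \<Sum>b<d1. \<Sum>g\<in>H. R0 g $$ (a,a) * R1 (inv\<^bsub>G\<^esub> g) $$ (b,b))"
    by (intro sum.cong refl) (simp add: avg_Emat_entry[OF r0 r1])
  also have "\<dots> = (\<Sum>g\<in>H. \<Sum>a<d0. \<Sum>b<d1. R0 g $$ (a,a) * R1 (inv\<^bsub>G\<^esub> g) $$ (b,b))"
    by (simp add: sum.swap[of _ H])
  also have "\<dots> = (\<Sum>g\<in>H. mat_trace (R0 g) * mat_trace (R1 (inv\<^bsub>G\<^esub> g)))"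
  proof (rule sum.cong[OF refl])
    fix g assume g: "g \<in> H"
    have gi: "inv\<^bsub>G\<^esub> g \<in> H" using subgroup.m_inv_closed[OF sub g] .
    show "(\<Sum>a<d0. \<Sum>b<d1. R0 g $$ (a,a) * R1 (inv\<^bsub>G\<^esub> g) $$ (b,b)) = mat_trace (R0 g) * mat_trace (R1 (inv\<^bsub>G\<^esub> g))"
      unfolding mat_trace_def using rep_carrier[OF grp sub r0 g] rep_carrier[OF grp sub r1 gi]
      by (simp add: sum_distrib_left sum_distrib_right sum.swap[of _ "{..<d1}"])
  qed
  finally show ?thesis .
qed

lemma orth:
  assumes irr: "irreducible_rep G H d R"
  shows "(\<Sum>g\<in>H. mat_trace (R g) * mat_trace (R (inv\<^bsub>G\<^esub> g))) = of_nat (card H)"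
proof -
  have r: "is_rep G H d R" using irr unfolding irreducible_rep_def by auto
  have d: "d > 0" using irr unfolding irreducible_rep_def by auto
  note C = rep_carrier[OF grp sub r]
  have inH: "inv\<^bsub>G\<^esub> g \<in> H" if "g \<in> H" for g using subgroup.m_inv_closed[OF sub that] .
  have key: "avg G H d d R R (Emat d d a b) $$ (a,b) = (if a = b then of_nat (card H) / of_nat d else 0)"
    if a: "a < d" and b: "b < d" for a b
  proof -
    define M where "M = avg G H d d R R (Emat d d a b)"
    have M: "M \<in> carrier_mat d d" unfolding M_def avg_def by simp
    have "\<forall>h\<in>H. R h * M = M * R h" unfolding M_def
      using avg_intertwines[OF grp sub r r Emat_carrier] by auto
    from schur_scalar[OF irr M this] obtain c where Mc: "M = c \<cdot>\<^sub>m 1\<^sub>m d" by auto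
    have "mat_trace M = (\<Sum>g\<in>H. mat_trace (R g * Emat d d a b * R (inv\<^bsub>G\<^esub> g)))"
      unfolding M_def avg_def
      by (rule mat_trace_msum, rule mult_carrier_mat[OF mult_carrier_mat[OF C Emat_carrier] C[OF inH]])
    also have "\<dots> = (\<Sum>g\<in>H. mat_trace (Emat d d a b))"
    proof (rule sum.cong[OF refl])
      fix g assume g: "g \<in> H"
      have "mat_trace (R g * Emat d d a b * R (inv\<^bsub>G\<^esub> g)) = mat_trace (R (inv\<^bsub>G\<^esub> g) * (R g * Emat d d a b))"
        by (rule mat_trace_comm[OF mult_carrier_mat[OF C[OF g] Emat_carrier] C[OF inH[OF g]]])
      also have "R (inv\<^bsub>G\<^esub> g) * (R g * Emat d d a b) = (R (inv\<^bsub>G\<^esub> g) * R g) * Emat d d a b"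
        by (rule assoc_mult_mat[symmetric, OF C[OF inH[OF g]] C[OF g] Emat_carrier])
      also have "\<dots> = Emat d d a b" using rep_inv1[OF grp sub r g] using left_mult_one_mat[OF Emat_carrier] by simp
      finally show "mat_trace (R g * Emat d d a b * R (inv\<^bsub>G\<^esub> g)) = mat_trace (Emat d d a b)" .
    qed
    also have "\<dots> = of_nat (card H) * (if a = b then 1 else 0)" using mat_trace_Emat[OF a b] by simp
    finally have "c * of_nat d = of_nat (card H) * (if a = b then 1 else 0)"
      unfolding Mc mat_trace_smult_one .
    then have "c = of_nat (card H) * (if a = b then 1 else 0) / of_nat d" using d
      by (simp add: field_simps)
    then show ?thesis unfolding M_def[symmetric] Mc using a b by auto
  qed
  have "(\<Sum>g\<in>H. mat_trace (R g) * mat_trace (R (inv\<^bsub>G\<^esub> g)))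
      = (\<Sum>a<d. \<Sum>b<d. avg G H d d R R (Emat d d a b) $$ (a,b))"
    using sum_traces[OF r r] by simp
  also have "\<dots> = (\<Sum>a<d. of_nat (card H) / of_nat d)"
    by (intro sum.cong refl) (simp add: key sum.delta)
  also have "\<dots> = of_nat (card H)" using d by simp
  finally show ?thesis .
qed

lemma equal_char_commutant:
  assumes irr: "irreducible_rep G H d R0" and r: "is_rep G H d R"
    and tr: "\<forall>g\<in>H. mat_trace (R g) = mat_trace (R0 g)"
    and T: "T \<in> carrier_mat d d" and comm: "\<forall>h\<in>H. R h * T = T * R h"
  shows "\<exists>c. T = c \<cdot>\<^sub>m 1\<^sub>m d"
proof -
  have r0: "is_rep G H d R0" using irr unfolding irreducible_rep_def by auto
  note C0 = rep_carrier[OF grp sub r0] and C = rep_carrier[OF grp sub r]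
  have inH: "inv\<^bsub>G\<^esub> g \<in> H" if "g \<in> H" for g using subgroup.m_inv_closed[OF sub that] .
  have "\<exists>a<d. \<exists>b<d. avg G H d d R0 R (Emat d d a b) \<noteq> 0\<^sub>m d d"
  proof (rule ccontr)
    assume "\<not> ?thesis"
    then have z: "avg G H d d R0 R (Emat d d a b) $$ (a,b) = 0" if "a < d" "b < d" for a b
      using that by auto
    have "(\<Sum>g\<in>H. mat_trace (R0 g) * mat_trace (R (inv\<^bsub>G\<^esub> g))) = 0"
      unfolding sum_traces[OF r0 r, symmetric] by (simp add: z)
    moreover have "(\<Sum>g\<in>H. mat_trace (R0 g) * mat_trace (R (inv\<^bsub>G\<^esub> g))) = of_nat (card H)"
      using orth[OF irr] tr inH by (auto intro!: sum.cong)
    moreover have "card H > 0" using fin subgroup.one_closed[OF sub] card_gt_0_iff by blast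
    ultimately show False by simp
  qed
  then obtain a b where a: "a < d" and b: "b < d" and nz: "avg G H d d R0 R (Emat d d a b) \<noteq> 0\<^sub>m d d" by auto
  define Y where "Y = avg G H d d R0 R (Emat d d a b)"
  have Y: "Y \<in> carrier_mat d d" unfolding Y_def avg_def by simp
  have YI: "\<forall>h\<in>H. R0 h * Y = Y * R h" unfolding Y_def
    using avg_intertwines[OF grp sub r0 r Emat_carrier] by auto
  have "det Y \<noteq> 0"
    by (rule irr_invariant[OF irr Y]) (use YI C nz Y_def in auto)
  from det_non_zero_imp_unit[OF Y this, of "()"] obtain Yi where Yi: "Yi \<in> carrier_mat d d"
    and YYi: "Y * Yi = 1\<^sub>m d" and YiY: "Yi * Y = 1\<^sub>m d"
    unfolding Units_def ring_mat_def by auto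
  have YiI: "Yi * R0 h = R h * Yi" if h: "h \<in> H" for h
  proof -
    have "Yi * R0 h = Yi * (R0 h * Y) * Yi" using Yi Y C0[OF h] YYi
      by (simp add: assoc_mult_mat[of _ d d _ d _ d])
    also have "\<dots> = Yi * (Y * R h) * Yi" using YI h by simp
    also have "\<dots> = R h * Yi" using Yi Y C[OF h] YiY
      by (simp add: assoc_mult_mat[of _ d d _ d _ d] assoc_mult_mat[of Yi d d Y d _ d, symmetric])
    finally show ?thesis .
  qed
  define T' where "T' = Y * T * Yi"
  have T': "T' \<in> carrier_mat d d" unfolding T'_def using Y T Yi by auto
  have "\<forall>h\<in>H. R0 h * T' = T' * R0 h"
  proof
    fix h assume h: "h \<in> H"
    have "R0 h * T' = (R0 h * Y) * T * Yi" unfolding T'_def using Y T Yi C0[OF h]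
      by (simp add: assoc_mult_mat[of _ d d _ d _ d])
    also have "\<dots> = Y * (R h * T) * Yi" using YI h Y T Yi C[OF h]
      by (simp add: assoc_mult_mat[of _ d d _ d _ d])
    also have "\<dots> = Y * T * (R h * Yi)" using comm h Y T Yi C[OF h]
      by (simp add: assoc_mult_mat[of _ d d _ d _ d])
    also have "\<dots> = T' * R0 h" unfolding T'_def using YiI[OF h] Y T Yi C0[OF h] C[OF h]
      by (simp add: assoc_mult_mat[of _ d d _ d _ d])
    finally show "R0 h * T' = T' * R0 h" .
  qed
  from schur_scalar[OF irr T' this] obtain c where c: "T' = c \<cdot>\<^sub>m 1\<^sub>m d" by auto
  have "T = Yi * T' * Y" unfolding T'_def using Y T Yi YiY
    by (simp add: assoc_mult_mat[of _ d d _ d _ d] assoc_mult_mat[of Yi d d Y d _ d, symmetric])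
  also have "\<dots> = c \<cdot>\<^sub>m 1\<^sub>m d" unfolding c using Yi Y YiY
    using mult_smult_distrib[OF Yi one_carrier_mat, of c] mult_smult_assoc_mat[OF Yi Y, of c] by simp
  finally show ?thesis by blast
qed

end


lemma invertible_ex:
  assumes "invertible_mat A" "A \<in> carrier_mat n n"
  shows "\<exists>B\<in>carrier_mat n n. A * B = 1\<^sub>m n \<and> B * A = 1\<^sub>m n"
proof -
  from assms obtain B where AB: "A * B = 1\<^sub>m n" and BA: "B * A = 1\<^sub>m (dim_row B)"
    unfolding invertible_mat_def inverts_mat_def by auto
  have "dim_col B = n" using AB by (metis index_mult_mat(3) index_one_mat(3))
  moreover have "dim_row B = n" using BA assms(2) by (metis carrier_matD(2) index_mult_mat(3) index_one_mat(3))
  ultimately show ?thesis using AB BA by auto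
qed

lemma scal_cancel:
  assumes M: "M \<in> carrier_mat n n" and inv: "invertible_mat M" and n: "n > 0"
    and eq: "c1 \<cdot>\<^sub>m M = (c2::complex) \<cdot>\<^sub>m M"
  shows "c1 = c2"
proof -
  from invertible_ex[OF inv M] obtain B where B: "B \<in> carrier_mat n n" and MB: "M * B = 1\<^sub>m n" by auto
  have "(c1 \<cdot>\<^sub>m M) * B = (c2 \<cdot>\<^sub>m M) * B" using eq by simp
  then have "c1 \<cdot>\<^sub>m 1\<^sub>m n = c2 \<cdot>\<^sub>m 1\<^sub>m n" using mult_smult_assoc_mat[OF M B] MB by simp
  then have "(c1 \<cdot>\<^sub>m 1\<^sub>m n) $$ (0,0) = (c2 \<cdot>\<^sub>m 1\<^sub>m n) $$ (0,0)" by simp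
  then show ?thesis using n by simp
qed

lemma sum_blocks: "(\<Sum>r<k*e. f r) = (\<Sum>j<k. \<Sum>c<e. f (j*e + c :: nat) :: 'c :: comm_monoid_add)"
proof -
  have bij: "bij_betw (\<lambda>(j,c). j*e + c) ({..<k} \<times> {..<e}) {..<k*e}"
  proof (rule bij_betwI[where g="\<lambda>r. (r div e, r mod e)"])
    show "(\<lambda>(j,c). j*e + c) \<in> {..<k} \<times> {..<e} \<rightarrow> {..<k*e}"
    proof
      fix x assume "x \<in> {..<k} \<times> {..<e}"
      then obtain j c where x: "x = (j,c)" "j < k" "c < e" by auto
      have "j*e + c < j*e + e" using x by simp
      also have "\<dots> = (Suc j) * e" by simp
      also have "\<dots> \<le> k * e" using x by (intro mult_le_mono1) auto
      finally show "(\<lambda>(j,c). j*e + c) x \<in> {..<k*e}" using x by simp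
    qed
    show "(\<lambda>r. (r div e, r mod e)) \<in> {..<k*e} \<rightarrow> {..<k} \<times> {..<e}"
      by (auto simp: less_mult_imp_div_less) (metis mod_less_divisor mult_zero_right neq0_conv not_less_zero)
    show "(\<lambda>r. (r div e, r mod e)) ((\<lambda>(j,c). j*e + c) x) = x" if "x \<in> {..<k} \<times> {..<e}" for x
      using that by auto
    show "(\<lambda>(j,c). j*e + c) (r div e, r mod e) = r" for r by simp
  qed
  have "(\<Sum>r<k*e. f r) = (\<Sum>x\<in>{..<k} \<times> {..<e}. f ((\<lambda>(j,c). j*e + c) x))"
    by (rule sum.reindex_bij_betw[OF bij, symmetric])
  also have "\<dots> = (\<Sum>j<k. \<Sum>c<e. f (j*e + c))"
    by (simp add: sum.cartesian_product case_prod_beta)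
  finally show ?thesis .
qed



locale indc =
  fixes G :: "('a,'b) monoid_scheme" and K Nn L Ln :: "'a set"
    and \<theta>t :: "'a \<Rightarrow> complex" and Pt :: "'a \<Rightarrow> complex mat" and \<alpha>t :: "'a \<Rightarrow> 'a \<Rightarrow> complex"
    and e k :: nat and t :: "nat \<Rightarrow> 'a"
  assumes grp: "group G" and fin: "finite (carrier G)"
    and K: "subgroup K G" and Nn: "subgroup Nn G" and NK: "Nn \<subseteq> K"
    and nrm: "\<forall>x\<in>K. \<forall>n\<in>Nn. x \<otimes>\<^bsub>G\<^esub> n \<otimes>\<^bsub>G\<^esub> inv\<^bsub>G\<^esub> x \<in> Nn"
    and L: "subgroup L G" and LK: "L \<subseteq> K"
    and KNL: "\<forall>x\<in>K. \<exists>n\<in>Nn. \<exists>l\<in>L. x = n \<otimes>\<^bsub>G\<^esub> l"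
    and Ln_def: "Ln = L \<inter> Nn"
    and e_pos: "e > 0"
    and Pt_carr: "\<forall>x\<in>L. Pt x \<in> carrier_mat e e"
    and Pt_inv: "\<forall>x\<in>L. invertible_mat (Pt x)"
    and Pt_mult: "\<forall>x\<in>L. \<forall>y\<in>L. Pt x * Pt y = \<alpha>t x y \<cdot>\<^sub>m Pt (x \<otimes>\<^bsub>G\<^esub> y)"
    and Pt_one: "Pt \<one>\<^bsub>G\<^esub> = 1\<^sub>m e"
    and Pt_xn: "\<forall>x\<in>L. \<forall>n\<in>Ln. Pt (x \<otimes>\<^bsub>G\<^esub> n) = Pt x * Pt n \<and> Pt (n \<otimes>\<^bsub>G\<^esub> x) = Pt n * Pt x"
    and \<theta>t_aff: "\<forall>x. \<theta>t x = (if x \<in> Ln then mat_trace (Pt x) else 0)"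
    and \<theta>t_inv: "\<forall>l\<in>L. \<forall>n\<in>Ln. \<theta>t (l \<otimes>\<^bsub>G\<^esub> n \<otimes>\<^bsub>G\<^esub> inv\<^bsub>G\<^esub> l) = \<theta>t n"
    and t_in: "\<forall>i<k. t i \<in> Nn"
    and t_dist: "\<forall>i<k. \<forall>j<k. inv\<^bsub>G\<^esub> (t i) \<otimes>\<^bsub>G\<^esub> t j \<in> L \<longrightarrow> i = j"
    and t_cover: "\<forall>n\<in>Nn. \<exists>i<k. inv\<^bsub>G\<^esub> (t i) \<otimes>\<^bsub>G\<^esub> n \<in> L"
begin

interpretation Gr: group G by (rule grp)

lemma KG: "x \<in> K \<Longrightarrow> x \<in> carrier G" using subgroup.mem_carrier[OF K] .
lemma NG: "x \<in> Nn \<Longrightarrow> x \<in> carrier G" using subgroup.mem_carrier[OF Nn] .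
lemma LG: "x \<in> L \<Longrightarrow> x \<in> carrier G" using subgroup.mem_carrier[OF L] .
lemma tG: "i < k \<Longrightarrow> t i \<in> carrier G" using t_in NG by auto
lemma tN: "i < k \<Longrightarrow> t i \<in> Nn" using t_in by auto
lemma NinK: "x \<in> Nn \<Longrightarrow> x \<in> K" using NK by auto
lemma LinK: "x \<in> L \<Longrightarrow> x \<in> K" using LK by auto

lemma Kinv: "x \<in> K \<Longrightarrow> inv\<^bsub>G\<^esub> x \<in> K" using subgroup.m_inv_closed[OF K] .
lemma Ninv: "x \<in> Nn \<Longrightarrow> inv\<^bsub>G\<^esub> x \<in> Nn" using subgroup.m_inv_closed[OF Nn] .
lemma Linv: "x \<in> L \<Longrightarrow> inv\<^bsub>G\<^esub> x \<in> L" using subgroup.m_inv_closed[OF L] .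
lemma Kmult: "x \<in> K \<Longrightarrow> y \<in> K \<Longrightarrow> x \<otimes>\<^bsub>G\<^esub> y \<in> K" using subgroup.m_closed[OF K] .
lemma Nmult: "x \<in> Nn \<Longrightarrow> y \<in> Nn \<Longrightarrow> x \<otimes>\<^bsub>G\<^esub> y \<in> Nn" using subgroup.m_closed[OF Nn] .
lemma Lmult: "x \<in> L \<Longrightarrow> y \<in> L \<Longrightarrow> x \<otimes>\<^bsub>G\<^esub> y \<in> L" using subgroup.m_closed[OF L] .
lemma Lone: "\<one>\<^bsub>G\<^esub> \<in> L" using subgroup.one_closed[OF L] .
lemma None: "\<one>\<^bsub>G\<^esub> \<in> Nn" using subgroup.one_closed[OF Nn] .

lemma cancel1: "x \<in> carrier G \<Longrightarrow> y \<in> carrier G \<Longrightarrow> inv\<^bsub>G\<^esub> x \<otimes>\<^bsub>G\<^esub> (x \<otimes>\<^bsub>G\<^esub> y) = y"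
  by (simp add: Gr.m_assoc[symmetric])
lemma cancel2: "x \<in> carrier G \<Longrightarrow> y \<in> carrier G \<Longrightarrow> x \<otimes>\<^bsub>G\<^esub> (inv\<^bsub>G\<^esub> x \<otimes>\<^bsub>G\<^esub> y) = y"
  by (simp add: Gr.m_assoc[symmetric])

lemmas gsimps = Gr.m_assoc Gr.inv_mult_group cancel1 cancel2 Gr.inv_inv Gr.l_inv Gr.r_inv Gr.l_one Gr.r_one
  Gr.inv_closed Gr.m_closed

lemma conjN: "x \<in> K \<Longrightarrow> n \<in> Nn \<Longrightarrow> x \<otimes>\<^bsub>G\<^esub> (n \<otimes>\<^bsub>G\<^esub> inv\<^bsub>G\<^esub> x) \<in> Nn"
  using nrm KG NG by (simp add: Gr.m_assoc)

lemma conjN': "x \<in> K \<Longrightarrow> n \<in> Nn \<Longrightarrow> inv\<^bsub>G\<^esub> x \<otimes>\<^bsub>G\<^esub> (n \<otimes>\<^bsub>G\<^esub> x) \<in> Nn"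
  using conjN[OF Kinv, of x n] KG by simp

lemma NK_swap: "x \<in> K \<Longrightarrow> n \<in> Nn \<Longrightarrow> inv\<^bsub>G\<^esub> x \<otimes>\<^bsub>G\<^esub> (n \<otimes>\<^bsub>G\<^esub> x) \<in> Nn" by (rule conjN')

lemma ex_j: assumes x: "x \<in> K" and i: "i < k"
  shows "\<exists>j<k. inv\<^bsub>G\<^esub> (t i) \<otimes>\<^bsub>G\<^esub> (x \<otimes>\<^bsub>G\<^esub> t j) \<in> L"
proof -
  have "inv\<^bsub>G\<^esub> x \<otimes>\<^bsub>G\<^esub> t i \<in> K" using Kmult[OF Kinv[OF x] NinK[OF tN[OF i]]] .
  then obtain n l where n: "n \<in> Nn" and l: "l \<in> L" and eq: "inv\<^bsub>G\<^esub> x \<otimes>\<^bsub>G\<^esub> t i = n \<otimes>\<^bsub>G\<^esub> l"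
    using KNL by blast
  from t_cover n obtain j where j: "j < k" and l0: "inv\<^bsub>G\<^esub> (t j) \<otimes>\<^bsub>G\<^esub> n \<in> L" by blast
  have ti: "t i = x \<otimes>\<^bsub>G\<^esub> (n \<otimes>\<^bsub>G\<^esub> l)"
    using eq x i n l KG NG LG tG by (metis Gr.inv_solve_left' Gr.m_closed)
  have "inv\<^bsub>G\<^esub> (t i) \<otimes>\<^bsub>G\<^esub> (x \<otimes>\<^bsub>G\<^esub> t j) = inv\<^bsub>G\<^esub> l \<otimes>\<^bsub>G\<^esub> inv\<^bsub>G\<^esub> (inv\<^bsub>G\<^esub> (t j) \<otimes>\<^bsub>G\<^esub> n)"
    unfolding ti using x n l j KG NG LG tG by (simp add: gsimps)
  also have "\<dots> \<in> L" using Lmult[OF Linv[OF l] Linv[OF l0]] .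
  finally show ?thesis using j by blast
qed

lemma uniq_j: assumes x: "x \<in> K" and i: "i < k" and j: "j < k" and j': "j' < k"
  and a: "inv\<^bsub>G\<^esub> (t i) \<otimes>\<^bsub>G\<^esub> (x \<otimes>\<^bsub>G\<^esub> t j) \<in> L"
  and a': "inv\<^bsub>G\<^esub> (t i) \<otimes>\<^bsub>G\<^esub> (x \<otimes>\<^bsub>G\<^esub> t j') \<in> L"
  shows "j = j'"
proof -
  have "inv\<^bsub>G\<^esub> (inv\<^bsub>G\<^esub> (t i) \<otimes>\<^bsub>G\<^esub> (x \<otimes>\<^bsub>G\<^esub> t j)) \<otimes>\<^bsub>G\<^esub> (inv\<^bsub>G\<^esub> (t i) \<otimes>\<^bsub>G\<^esub> (x \<otimes>\<^bsub>G\<^esub> t j'))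
      = inv\<^bsub>G\<^esub> (t j) \<otimes>\<^bsub>G\<^esub> t j'"
    using x i j j' KG tG by (simp add: gsimps)
  moreover have "inv\<^bsub>G\<^esub> (inv\<^bsub>G\<^esub> (t i) \<otimes>\<^bsub>G\<^esub> (x \<otimes>\<^bsub>G\<^esub> t j)) \<otimes>\<^bsub>G\<^esub> (inv\<^bsub>G\<^esub> (t i) \<otimes>\<^bsub>G\<^esub> (x \<otimes>\<^bsub>G\<^esub> t j')) \<in> L"
    using Lmult[OF Linv[OF a] a'] .
  ultimately show ?thesis using t_dist j j' by auto
qed

end


lemma one_smult_mat[simp]: "(1::complex) \<cdot>\<^sub>m A = A" by (intro eq_matI) auto

context indc begin

interpretation Gr: group G by (rule grp)

lemma PtC: "x \<in> L \<Longrightarrow> Pt x \<in> carrier_mat e e" using Pt_carr by auto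

lemma Pt_inverse: assumes "x \<in> L" obtains B where "B \<in> carrier_mat e e" "Pt x * B = 1\<^sub>m e" "B * Pt x = 1\<^sub>m e"
  using invertible_ex[OF _ PtC[OF assms]] Pt_inv assms by blast

lemma LnL: "n \<in> Ln \<Longrightarrow> n \<in> L" and LnN: "n \<in> Ln \<Longrightarrow> n \<in> Nn" using Ln_def by auto

lemma at_right: assumes a: "a \<in> L" and b: "b \<in> L" and n: "n \<in> Ln"
  shows "\<alpha>t a (b \<otimes>\<^bsub>G\<^esub> n) = \<alpha>t a b"
proof -
  have nL: "n \<in> L" using LnL[OF n] .
  have bn: "b \<otimes>\<^bsub>G\<^esub> n \<in> L" using Lmult[OF b nL] .
  have abn: "a \<otimes>\<^bsub>G\<^esub> (b \<otimes>\<^bsub>G\<^esub> n) \<in> L" using Lmult[OF a bn] .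
  have "Pt a * Pt (b \<otimes>\<^bsub>G\<^esub> n) = Pt a * (Pt b * Pt n)" using Pt_xn b n by auto
  also have "\<dots> = (Pt a * Pt b) * Pt n" using PtC a b nL by (simp add: assoc_mult_mat[of _ e e _ e _ e])
  also have "\<dots> = \<alpha>t a b \<cdot>\<^sub>m (Pt (a \<otimes>\<^bsub>G\<^esub> b) * Pt n)"
    using Pt_mult a b mult_smult_assoc_mat[OF PtC[OF Lmult[OF a b]] PtC[OF nL]] by simp
  also have "Pt (a \<otimes>\<^bsub>G\<^esub> b) * Pt n = Pt (a \<otimes>\<^bsub>G\<^esub> (b \<otimes>\<^bsub>G\<^esub> n))"
    using conjunct1[OF Pt_xn[rule_format, OF Lmult[OF a b] n]] Gr.m_assoc[OF LG[OF a] LG[OF b] LG[OF nL]] by simp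
  finally have "\<alpha>t a (b \<otimes>\<^bsub>G\<^esub> n) \<cdot>\<^sub>m Pt (a \<otimes>\<^bsub>G\<^esub> (b \<otimes>\<^bsub>G\<^esub> n)) = \<alpha>t a b \<cdot>\<^sub>m Pt (a \<otimes>\<^bsub>G\<^esub> (b \<otimes>\<^bsub>G\<^esub> n))"
    using Pt_mult a bn by simp
  then show ?thesis using scal_cancel[OF PtC[OF abn] _ e_pos] Pt_inv abn by auto
qed

lemma Ln_conj: assumes b: "b \<in> L" and n: "n \<in> Ln" shows "inv\<^bsub>G\<^esub> b \<otimes>\<^bsub>G\<^esub> (n \<otimes>\<^bsub>G\<^esub> b) \<in> Ln"
proof -
  have "inv\<^bsub>G\<^esub> b \<otimes>\<^bsub>G\<^esub> (n \<otimes>\<^bsub>G\<^esub> b) \<in> Nn" using conjN'[OF LinK[OF b] LnN[OF n]] .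
  moreover have "inv\<^bsub>G\<^esub> b \<otimes>\<^bsub>G\<^esub> (n \<otimes>\<^bsub>G\<^esub> b) \<in> L" using Lmult[OF Linv[OF b] Lmult[OF LnL[OF n] b]] .
  ultimately show ?thesis using Ln_def by auto
qed

lemma at_left: assumes a: "a \<in> L" and b: "b \<in> L" and n: "n \<in> Ln"
  shows "\<alpha>t (a \<otimes>\<^bsub>G\<^esub> n) b = \<alpha>t a b"
proof -
  have nL: "n \<in> L" using LnL[OF n] .
  have an: "a \<otimes>\<^bsub>G\<^esub> n \<in> L" using Lmult[OF a nL] .
  have nb: "n \<otimes>\<^bsub>G\<^esub> b \<in> L" using Lmult[OF nL b] .
  have anb: "a \<otimes>\<^bsub>G\<^esub> (n \<otimes>\<^bsub>G\<^esub> b) \<in> L" using Lmult[OF a nb] .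
  have "Pt (a \<otimes>\<^bsub>G\<^esub> n) * Pt b = (Pt a * Pt n) * Pt b" using Pt_xn a n by auto
  also have "\<dots> = Pt a * (Pt n * Pt b)" using PtC a b nL by (simp add: assoc_mult_mat[of _ e e _ e _ e])
  also have "\<dots> = Pt a * Pt (n \<otimes>\<^bsub>G\<^esub> b)" using Pt_xn b n by auto
  also have "\<dots> = \<alpha>t a (n \<otimes>\<^bsub>G\<^esub> b) \<cdot>\<^sub>m Pt (a \<otimes>\<^bsub>G\<^esub> (n \<otimes>\<^bsub>G\<^esub> b))" using Pt_mult a nb by auto
  finally have "\<alpha>t (a \<otimes>\<^bsub>G\<^esub> n) b \<cdot>\<^sub>m Pt (a \<otimes>\<^bsub>G\<^esub> (n \<otimes>\<^bsub>G\<^esub> b)) = \<alpha>t a (n \<otimes>\<^bsub>G\<^esub> b) \<cdot>\<^sub>m Pt (a \<otimes>\<^bsub>G\<^esub> (n \<otimes>\<^bsub>G\<^esub> b))"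
    using Pt_mult an b a nL LG by (simp add: Gr.m_assoc)
  then have "\<alpha>t (a \<otimes>\<^bsub>G\<^esub> n) b = \<alpha>t a (n \<otimes>\<^bsub>G\<^esub> b)"
    using scal_cancel[OF PtC[OF anb] _ e_pos] Pt_inv anb by auto
  also have "n \<otimes>\<^bsub>G\<^esub> b = b \<otimes>\<^bsub>G\<^esub> (inv\<^bsub>G\<^esub> b \<otimes>\<^bsub>G\<^esub> (n \<otimes>\<^bsub>G\<^esub> b))"
    using b nL LG by (simp add: cancel2)
  also have "\<alpha>t a \<dots> = \<alpha>t a b" using at_right[OF a b Ln_conj[OF b n]] .
  finally show ?thesis .
qed

lemma at_nz: assumes a: "a \<in> L" and b: "b \<in> L" shows "\<alpha>t a b \<noteq> 0"
proof
  assume z: "\<alpha>t a b = 0"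
  obtain A where A: "A \<in> carrier_mat e e" "Pt a * A = 1\<^sub>m e" using Pt_inverse[OF a] by blast
  obtain B where B: "B \<in> carrier_mat e e" "Pt b * B = 1\<^sub>m e" using Pt_inverse[OF b] by blast
  have "Pt a * Pt b = 0\<^sub>m e e" using Pt_mult a b z PtC[OF Lmult[OF a b]] by auto
  then have "Pt a * Pt b * (B * A) = 0\<^sub>m e e" using A B by simp
  moreover have "Pt a * Pt b * (B * A) = 1\<^sub>m e"
  proof -
    have "Pt a * Pt b * (B * A) = Pt a * (Pt b * (B * A))"
      by (rule assoc_mult_mat[OF PtC[OF a] PtC[OF b] mult_carrier_mat[OF B(1) A(1)]])
    also have "Pt b * (B * A) = (Pt b * B) * A" by (rule assoc_mult_mat[symmetric, OF PtC[OF b] B(1) A(1)])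
    also have "\<dots> = A" using B(2) A(1) by simp
    finally show ?thesis using A(2) by simp
  qed
  ultimately have "(1\<^sub>m e :: complex mat) $$ (0,0) = 0\<^sub>m e e $$ (0,0)" by simp
  then show False using e_pos by simp
qed

lemma at_x1: assumes a: "a \<in> L" shows "\<alpha>t a \<one>\<^bsub>G\<^esub> = 1"
proof -
  have "\<alpha>t a \<one>\<^bsub>G\<^esub> \<cdot>\<^sub>m Pt a = 1 \<cdot>\<^sub>m Pt a"
    using Pt_mult a Lone Pt_one PtC[OF a] LG by (metis Gr.r_one right_mult_one_mat one_smult_mat)
  then show ?thesis using scal_cancel[OF PtC[OF a] _ e_pos] Pt_inv a by auto
qed

lemma at_1x: assumes a: "a \<in> L" shows "\<alpha>t \<one>\<^bsub>G\<^esub> a = 1"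
proof -
  have "\<alpha>t \<one>\<^bsub>G\<^esub> a \<cdot>\<^sub>m Pt a = 1 \<cdot>\<^sub>m Pt a"
    using Pt_mult a Lone Pt_one PtC[OF a] LG by (metis Gr.l_one left_mult_one_mat one_smult_mat)
  then show ?thesis using scal_cancel[OF PtC[OF a] _ e_pos] Pt_inv a by auto
qed

lemma at_well: assumes a: "a \<in> L" and a': "a' \<in> L" and b: "b \<in> L" and b': "b' \<in> L"
  and aa: "inv\<^bsub>G\<^esub> a \<otimes>\<^bsub>G\<^esub> a' \<in> Nn" and bb: "inv\<^bsub>G\<^esub> b \<otimes>\<^bsub>G\<^esub> b' \<in> Nn"
  shows "\<alpha>t a b = \<alpha>t a' b'"
proof -
  have na: "inv\<^bsub>G\<^esub> a \<otimes>\<^bsub>G\<^esub> a' \<in> Ln" using aa Lmult[OF Linv[OF a] a'] Ln_def by auto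
  have nb: "inv\<^bsub>G\<^esub> b \<otimes>\<^bsub>G\<^esub> b' \<in> Ln" using bb Lmult[OF Linv[OF b] b'] Ln_def by auto
  have "a' = a \<otimes>\<^bsub>G\<^esub> (inv\<^bsub>G\<^esub> a \<otimes>\<^bsub>G\<^esub> a')" using a a' LG by (simp add: cancel2)
  moreover have "b' = b \<otimes>\<^bsub>G\<^esub> (inv\<^bsub>G\<^esub> b \<otimes>\<^bsub>G\<^esub> b')" using b b' LG by (simp add: cancel2)
  ultimately have "\<alpha>t a' b' = \<alpha>t (a \<otimes>\<^bsub>G\<^esub> (inv\<^bsub>G\<^esub> a \<otimes>\<^bsub>G\<^esub> a')) (b \<otimes>\<^bsub>G\<^esub> (inv\<^bsub>G\<^esub> b \<otimes>\<^bsub>G\<^esub> b'))" by simp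
  also have "\<dots> = \<alpha>t a (b \<otimes>\<^bsub>G\<^esub> (inv\<^bsub>G\<^esub> b \<otimes>\<^bsub>G\<^esub> b'))" using at_left[OF a _ na] Lmult[OF b LnL[OF nb]] by simp
  also have "\<dots> = \<alpha>t a b" using at_right[OF a b nb] .
  finally show ?thesis by simp
qed

end


context indc begin

interpretation Gr: group G by (rule grp)

definition D where "D = k * e"
definition Pt0 where "Pt0 y = (if y \<in> L then Pt y else 0\<^sub>m e e)"
definition Pm where "Pm x = mat D D (\<lambda>(p,q). Pt0 (inv\<^bsub>G\<^esub> (t (p div e)) \<otimes>\<^bsub>G\<^esub> (x \<otimes>\<^bsub>G\<^esub> t (q div e))) $$ (p mod e, q mod e))"
definition rep where "rep x = (SOME a. a \<in> L \<and> inv\<^bsub>G\<^esub> x \<otimes>\<^bsub>G\<^esub> a \<in> Nn)"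
definition al where "al x y = \<alpha>t (rep x) (rep y)"

lemma Pm_carrier[simp]: "Pm x \<in> carrier_mat D D" unfolding Pm_def by simp
lemma Pm_dim[simp]: "dim_row (Pm x) = D" "dim_col (Pm x) = D" unfolding Pm_def by simp_all

lemma Pm_entry: "p < D \<Longrightarrow> q < D \<Longrightarrow>
  Pm x $$ (p,q) = Pt0 (inv\<^bsub>G\<^esub> (t (p div e)) \<otimes>\<^bsub>G\<^esub> (x \<otimes>\<^bsub>G\<^esub> t (q div e))) $$ (p mod e, q mod e)"
  unfolding Pm_def by simp

lemma blk: "p < D \<Longrightarrow> p div e < k \<and> p mod e < e"
  unfolding D_def using e_pos by (simp add: less_mult_imp_div_less)

lemma blk_div[simp]: "c < e \<Longrightarrow> (j * e + c) div e = j" using e_pos by simp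
lemma blk_mod[simp]: "c < e \<Longrightarrow> (j * e + c) mod e = c" using e_pos by simp
lemma blk_lt: "j < k \<Longrightarrow> c < e \<Longrightarrow> j * e + c < D"
proof -
  assume j: "j < k" and c: "c < e"
  have "j * e + c < j * e + e" using c by simp
  also have "\<dots> = Suc j * e" by simp
  also have "\<dots> \<le> k * e" using j by (intro mult_le_mono1) auto
  finally show ?thesis unfolding D_def .
qed

lemma Pt0_entry_zero: "y \<notin> L \<Longrightarrow> a < e \<Longrightarrow> b < e \<Longrightarrow> Pt0 y $$ (a,b) = 0"
  unfolding Pt0_def by simp

lemma rep_ex: assumes x: "x \<in> K" shows "rep x \<in> L \<and> inv\<^bsub>G\<^esub> x \<otimes>\<^bsub>G\<^esub> rep x \<in> Nn"
proof -
  obtain n l where n: "n \<in> Nn" and l: "l \<in> L" and xe: "x = n \<otimes>\<^bsub>G\<^esub> l" using KNL x by blast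
  have "inv\<^bsub>G\<^esub> x \<otimes>\<^bsub>G\<^esub> l = inv\<^bsub>G\<^esub> l \<otimes>\<^bsub>G\<^esub> (inv\<^bsub>G\<^esub> n \<otimes>\<^bsub>G\<^esub> l)"
    unfolding xe using n l NG LG by (simp add: gsimps)
  also have "\<dots> \<in> Nn" using conjN'[OF LinK[OF l] Ninv[OF n]] .
  finally have "l \<in> L \<and> inv\<^bsub>G\<^esub> x \<otimes>\<^bsub>G\<^esub> l \<in> Nn" using l by blast
  then show ?thesis unfolding rep_def by (rule someI)
qed

lemma al_well: assumes x: "x \<in> K" and y: "y \<in> K" and a: "a \<in> L" and b: "b \<in> L"
  and xa: "inv\<^bsub>G\<^esub> x \<otimes>\<^bsub>G\<^esub> a \<in> Nn" and yb: "inv\<^bsub>G\<^esub> y \<otimes>\<^bsub>G\<^esub> b \<in> Nn"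
  shows "al x y = \<alpha>t a b"
proof -
  note rx = rep_ex[OF x] and ry = rep_ex[OF y]
  have "inv\<^bsub>G\<^esub> (rep x) \<otimes>\<^bsub>G\<^esub> a = inv\<^bsub>G\<^esub> (inv\<^bsub>G\<^esub> x \<otimes>\<^bsub>G\<^esub> rep x) \<otimes>\<^bsub>G\<^esub> (inv\<^bsub>G\<^esub> x \<otimes>\<^bsub>G\<^esub> a)"
    using rx x a KG LG by (simp add: gsimps)
  also have "\<dots> \<in> Nn" using Nmult[OF Ninv[OF conjunct2[OF rx]] xa] .
  finally have 1: "inv\<^bsub>G\<^esub> (rep x) \<otimes>\<^bsub>G\<^esub> a \<in> Nn" .
  have "inv\<^bsub>G\<^esub> (rep y) \<otimes>\<^bsub>G\<^esub> b = inv\<^bsub>G\<^esub> (inv\<^bsub>G\<^esub> y \<otimes>\<^bsub>G\<^esub> rep y) \<otimes>\<^bsub>G\<^esub> (inv\<^bsub>G\<^esub> y \<otimes>\<^bsub>G\<^esub> b)"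
    using ry y b KG LG by (simp add: gsimps)
  also have "\<dots> \<in> Nn" using Nmult[OF Ninv[OF conjunct2[OF ry]] yb] .
  finally have 2: "inv\<^bsub>G\<^esub> (rep y) \<otimes>\<^bsub>G\<^esub> b \<in> Nn" .
  show ?thesis unfolding al_def using at_well[OF conjunct1[OF rx] a conjunct1[OF ry] b 1 2] .
qed

lemma Pm_mult: assumes x: "x \<in> K" and y: "y \<in> K"
  shows "Pm x * Pm y = al x y \<cdot>\<^sub>m Pm (x \<otimes>\<^bsub>G\<^esub> y)"
proof (rule eq_matI)
  fix p q assume "p < dim_row (al x y \<cdot>\<^sub>m Pm (x \<otimes>\<^bsub>G\<^esub> y))" "q < dim_col (al x y \<cdot>\<^sub>m Pm (x \<otimes>\<^bsub>G\<^esub> y))"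
  then have p: "p < D" and q: "q < D" by auto
  define i where "i = p div e"
  define a' where "a' = p mod e"
  define l where "l = q div e"
  define b' where "b' = q mod e"
  have i: "i < k" and a': "a' < e" using blk[OF p] i_def a'_def by auto
  have l: "l < k" and b': "b' < e" using blk[OF q] l_def b'_def by auto
  define A where "A j = inv\<^bsub>G\<^esub> (t i) \<otimes>\<^bsub>G\<^esub> (x \<otimes>\<^bsub>G\<^esub> t j)" for j
  define B where "B j = inv\<^bsub>G\<^esub> (t j) \<otimes>\<^bsub>G\<^esub> (y \<otimes>\<^bsub>G\<^esub> t l)" for j
  define C where "C = inv\<^bsub>G\<^esub> (t i) \<otimes>\<^bsub>G\<^esub> ((x \<otimes>\<^bsub>G\<^esub> y) \<otimes>\<^bsub>G\<^esub> t l)"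
  have AB: "A j \<otimes>\<^bsub>G\<^esub> B j = C" if "j < k" for j
    unfolding A_def B_def C_def using that i l x y KG tG by (simp add: gsimps)
  have "(Pm x * Pm y) $$ (p,q) = (\<Sum>r<D. Pm x $$ (p,r) * Pm y $$ (r,q))"
    by (rule mult_entry[OF Pm_carrier Pm_carrier p q])
  also have "\<dots> = (\<Sum>j<k. \<Sum>c<e. Pm x $$ (p, j*e+c) * Pm y $$ (j*e+c, q))"
    unfolding D_def by (rule sum_blocks)
  also have "\<dots> = (\<Sum>j<k. \<Sum>c<e. Pt0 (A j) $$ (a',c) * Pt0 (B j) $$ (c,b'))"
    by (intro sum.cong refl) (simp add: Pm_entry p q blk_lt A_def B_def i_def a'_def l_def b'_def)
  finally have lhs: "(Pm x * Pm y) $$ (p,q) = (\<Sum>j<k. \<Sum>c<e. Pt0 (A j) $$ (a',c) * Pt0 (B j) $$ (c,b'))" .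
  have rhs: "(al x y \<cdot>\<^sub>m Pm (x \<otimes>\<^bsub>G\<^esub> y)) $$ (p,q) = al x y * Pt0 C $$ (a',b')"
    using p q by (simp add: Pm_entry C_def i_def a'_def l_def b'_def)
  show "(Pm x * Pm y) $$ (p,q) = (al x y \<cdot>\<^sub>m Pm (x \<otimes>\<^bsub>G\<^esub> y)) $$ (p,q)"
  proof (cases "C \<in> L")
    case False
    have "Pt0 (A j) $$ (a',c) * Pt0 (B j) $$ (c,b') = 0" if j: "j < k" and c: "c < e" for j c
    proof (cases "A j \<in> L \<and> B j \<in> L")
      case True
      then have "C \<in> L" using AB[OF j] Lmult by metis
      with False show ?thesis by simp
    next
      case False
      then show ?thesis using Pt0_entry_zero a' b' c by auto
    qed
    then have "(Pm x * Pm y) $$ (p,q) = 0" unfolding lhs by (intro sum.neutral ballI) auto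
    moreover have "(al x y \<cdot>\<^sub>m Pm (x \<otimes>\<^bsub>G\<^esub> y)) $$ (p,q) = 0"
      unfolding rhs using Pt0_entry_zero[OF False a' b'] by simp
    ultimately show ?thesis by simp
  next
    case True
    obtain j0 where j0: "j0 < k" and Aj0: "A j0 \<in> L" using ex_j[OF x i] unfolding A_def by blast
    have Bj0: "B j0 \<in> L"
    proof -
      have "B j0 = inv\<^bsub>G\<^esub> (A j0) \<otimes>\<^bsub>G\<^esub> C"
        unfolding A_def B_def C_def using j0 l y x KG tG i by (simp add: gsimps)
      then show ?thesis using Lmult[OF Linv[OF Aj0] True] by simp
    qed
    have others: "(\<Sum>c<e. Pt0 (A j) $$ (a',c) * Pt0 (B j) $$ (c,b')) = 0" if j: "j < k" "j \<noteq> j0" for j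
    proof -
      have "A j \<notin> L" using uniq_j[OF x i j(1) j0] Aj0 j unfolding A_def by blast
      then show ?thesis using Pt0_entry_zero a' by simp
    qed
    have "(Pm x * Pm y) $$ (p,q) = (\<Sum>c<e. Pt0 (A j0) $$ (a',c) * Pt0 (B j0) $$ (c,b'))"
    proof -
      have "(\<Sum>j<k. \<Sum>c<e. Pt0 (A j) $$ (a',c) * Pt0 (B j) $$ (c,b'))
          = (\<Sum>j<k. if j = j0 then (\<Sum>c<e. Pt0 (A j0) $$ (a',c) * Pt0 (B j0) $$ (c,b')) else 0)"
        by (intro sum.cong refl) (use others in auto)
      also have "\<dots> = (\<Sum>c<e. Pt0 (A j0) $$ (a',c) * Pt0 (B j0) $$ (c,b'))" using j0 by simp
      finally show ?thesis unfolding lhs .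
    qed
    also have "\<dots> = (Pt (A j0) * Pt (B j0)) $$ (a',b')"
      using mult_entry[OF PtC[OF Aj0] PtC[OF Bj0] a' b'] Aj0 Bj0 unfolding Pt0_def by simp
    also have "\<dots> = \<alpha>t (A j0) (B j0) * Pt C $$ (a',b')"
      using Pt_mult Aj0 Bj0 AB[OF j0] PtC[OF True] a' b' by auto
    also have "\<alpha>t (A j0) (B j0) = al x y"
    proof (rule al_well[symmetric, OF x y Aj0 Bj0])
      have "inv\<^bsub>G\<^esub> x \<otimes>\<^bsub>G\<^esub> A j0 = (inv\<^bsub>G\<^esub> x \<otimes>\<^bsub>G\<^esub> (inv\<^bsub>G\<^esub> (t i) \<otimes>\<^bsub>G\<^esub> x)) \<otimes>\<^bsub>G\<^esub> t j0"
        unfolding A_def using x i j0 KG tG by (simp add: gsimps)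
      also have "\<dots> \<in> Nn" using Nmult[OF conjN'[OF x Ninv[OF tN[OF i]]] tN[OF j0]] .
      finally show "inv\<^bsub>G\<^esub> x \<otimes>\<^bsub>G\<^esub> A j0 \<in> Nn" .
      have "inv\<^bsub>G\<^esub> y \<otimes>\<^bsub>G\<^esub> B j0 = (inv\<^bsub>G\<^esub> y \<otimes>\<^bsub>G\<^esub> (inv\<^bsub>G\<^esub> (t j0) \<otimes>\<^bsub>G\<^esub> y)) \<otimes>\<^bsub>G\<^esub> t l"
        unfolding B_def using y l j0 KG tG by (simp add: gsimps)
      also have "\<dots> \<in> Nn" using Nmult[OF conjN'[OF y Ninv[OF tN[OF j0]]] tN[OF l]] .
      finally show "inv\<^bsub>G\<^esub> y \<otimes>\<^bsub>G\<^esub> B j0 \<in> Nn" .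
    qed
    finally show ?thesis unfolding rhs using True unfolding Pt0_def by simp
  qed
qed (auto)

end


lemma smult_smult_mat[simp]: "(a::complex) \<cdot>\<^sub>m (b \<cdot>\<^sub>m A) = (a * b) \<cdot>\<^sub>m A" by (intro eq_matI) auto

context indc begin

interpretation Gr: group G by (rule grp)

lemma Pm_one: "Pm \<one>\<^bsub>G\<^esub> = 1\<^sub>m D"
proof (rule eq_matI)
  fix p q assume "p < dim_row (1\<^sub>m D)" "q < dim_col (1\<^sub>m D)"
  then have p: "p < D" and q: "q < D" by auto
  have i: "p div e < k" "p mod e < e" and j: "q div e < k" "q mod e < e" using blk[OF p] blk[OF q] by auto
  have eq: "inv\<^bsub>G\<^esub> (t (p div e)) \<otimes>\<^bsub>G\<^esub> (\<one>\<^bsub>G\<^esub> \<otimes>\<^bsub>G\<^esub> t (q div e)) = inv\<^bsub>G\<^esub> (t (p div e)) \<otimes>\<^bsub>G\<^esub> t (q div e)"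
    using tG j by simp
  show "Pm \<one>\<^bsub>G\<^esub> $$ (p,q) = 1\<^sub>m D $$ (p,q)"
  proof (cases "p div e = q div e")
    case True
    have "p = q \<longleftrightarrow> p mod e = q mod e" using True by (metis div_mult_mod_eq)
    then show ?thesis using p q True i j tG unfolding Pm_entry[OF p q] Pt0_def
      by (simp add: Pt_one Lone)
  next
    case False
    then have "inv\<^bsub>G\<^esub> (t (p div e)) \<otimes>\<^bsub>G\<^esub> t (q div e) \<notin> L" using t_dist i j by blast
    moreover have "p \<noteq> q" using False by auto
    ultimately show ?thesis using p q i j unfolding Pm_entry[OF p q] eq Pt0_def by simp
  qed
qed auto

lemma al_nz: "x \<in> K \<Longrightarrow> y \<in> K \<Longrightarrow> al x y \<noteq> 0"
  unfolding al_def using at_nz rep_ex by auto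

lemma al_xn: assumes x: "x \<in> K" and n: "n \<in> Nn" shows "al x n = 1" "al n x = 1"
proof -
  have n1: "inv\<^bsub>G\<^esub> n \<otimes>\<^bsub>G\<^esub> \<one>\<^bsub>G\<^esub> \<in> Nn" using Ninv[OF n] NG by simp
  show "al x n = 1" using al_well[OF x NinK[OF n] conjunct1[OF rep_ex[OF x]] Lone conjunct2[OF rep_ex[OF x]] n1]
      at_x1[OF conjunct1[OF rep_ex[OF x]]] by simp
  show "al n x = 1" using al_well[OF NinK[OF n] x Lone conjunct1[OF rep_ex[OF x]] n1 conjunct2[OF rep_ex[OF x]]]
      at_1x[OF conjunct1[OF rep_ex[OF x]]] by simp
qed

lemma Pm_xn: assumes x: "x \<in> K" and n: "n \<in> Nn"
  shows "Pm (x \<otimes>\<^bsub>G\<^esub> n) = Pm x * Pm n" "Pm (n \<otimes>\<^bsub>G\<^esub> x) = Pm n * Pm x"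
  using Pm_mult[OF x NinK[OF n]] Pm_mult[OF NinK[OF n] x] al_xn[OF x n] by simp_all

lemma Pm_inverse: assumes x: "x \<in> K"
  shows "Pm x * ((1 / al x (inv\<^bsub>G\<^esub> x)) \<cdot>\<^sub>m Pm (inv\<^bsub>G\<^esub> x)) = 1\<^sub>m D"
    "((1 / al x (inv\<^bsub>G\<^esub> x)) \<cdot>\<^sub>m Pm (inv\<^bsub>G\<^esub> x)) * Pm x = 1\<^sub>m D"
proof -
  have nz: "al x (inv\<^bsub>G\<^esub> x) \<noteq> 0" using al_nz[OF x Kinv[OF x]] .
  have "Pm x * ((1 / al x (inv\<^bsub>G\<^esub> x)) \<cdot>\<^sub>m Pm (inv\<^bsub>G\<^esub> x)) = (1 / al x (inv\<^bsub>G\<^esub> x)) \<cdot>\<^sub>m (Pm x * Pm (inv\<^bsub>G\<^esub> x))"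
    by (rule mult_smult_distrib[OF Pm_carrier Pm_carrier])
  also have "\<dots> = 1\<^sub>m D" unfolding Pm_mult[OF x Kinv[OF x]] using x KG nz Pm_one
    by simp
  finally show 1: "Pm x * ((1 / al x (inv\<^bsub>G\<^esub> x)) \<cdot>\<^sub>m Pm (inv\<^bsub>G\<^esub> x)) = 1\<^sub>m D" .
  show "((1 / al x (inv\<^bsub>G\<^esub> x)) \<cdot>\<^sub>m Pm (inv\<^bsub>G\<^esub> x)) * Pm x = 1\<^sub>m D"
    by (rule mat_mult_left_right_inverse[OF Pm_carrier _ 1]) simp
qed

lemma Pm_invertible: "x \<in> K \<Longrightarrow> invertible_mat (Pm x)"
  unfolding invertible_mat_def inverts_mat_def using Pm_inverse[of x] by (auto simp: square_mat.simps)

end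


context indc begin

interpretation Gr: group G by (rule grp)

lemma diag_Pt0: assumes y: "y \<in> Nn" shows "(\<Sum>c<e. Pt0 y $$ (c,c)) = \<theta>t y"
proof (cases "y \<in> L")
  case True
  then have "y \<in> Ln" using y Ln_def by auto
  then show ?thesis using True \<theta>t_aff PtC[OF True] unfolding Pt0_def mat_trace_def by auto
next
  case False
  then have "y \<notin> Ln" using Ln_def by auto
  then show ?thesis using False \<theta>t_aff unfolding Pt0_def by auto
qed

lemma trace_Pm: assumes x: "x \<in> Nn"
  shows "mat_trace (Pm x) = (\<Sum>i<k. \<theta>t (inv\<^bsub>G\<^esub> (t i) \<otimes>\<^bsub>G\<^esub> (x \<otimes>\<^bsub>G\<^esub> t i)))"
proof -
  have "mat_trace (Pm x) = (\<Sum>p<D. Pm x $$ (p,p))" unfolding mat_trace_def by simp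
  also have "\<dots> = (\<Sum>i<k. \<Sum>c<e. Pm x $$ (i*e+c, i*e+c))" unfolding D_def by (rule sum_blocks)
  also have "\<dots> = (\<Sum>i<k. \<Sum>c<e. Pt0 (inv\<^bsub>G\<^esub> (t i) \<otimes>\<^bsub>G\<^esub> (x \<otimes>\<^bsub>G\<^esub> t i)) $$ (c,c))"
    by (intro sum.cong refl) (simp add: Pm_entry blk_lt)
  also have "\<dots> = (\<Sum>i<k. \<theta>t (inv\<^bsub>G\<^esub> (t i) \<otimes>\<^bsub>G\<^esub> (x \<otimes>\<^bsub>G\<^esub> t i)))"
    by (intro sum.cong refl diag_Pt0) (simp add: Nmult Ninv tN x)
  finally show ?thesis .
qed

lemma LnG: "Ln \<subseteq> carrier G" using Ln_def LG by auto
lemma Ln_fin: "finite Ln" using finite_subset[OF LnG fin] .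
lemma Ln_card: "card Ln > 0" using Ln_fin Ln_def Lone None card_gt_0_iff by blast

lemma bij_NL: "bij_betw (\<lambda>(i,l). l \<otimes>\<^bsub>G\<^esub> inv\<^bsub>G\<^esub> (t i)) ({..<k} \<times> Ln) Nn"
  unfolding bij_betw_def
proof
  show "inj_on (\<lambda>(i,l). l \<otimes>\<^bsub>G\<^esub> inv\<^bsub>G\<^esub> (t i)) ({..<k} \<times> Ln)"
  proof (rule inj_onI)
    fix z1 z2 assume z1: "z1 \<in> {..<k} \<times> Ln" and z2: "z2 \<in> {..<k} \<times> Ln"
      and eqz: "(\<lambda>(i,l). l \<otimes>\<^bsub>G\<^esub> inv\<^bsub>G\<^esub> (t i)) z1 = (\<lambda>(i,l). l \<otimes>\<^bsub>G\<^esub> inv\<^bsub>G\<^esub> (t i)) z2"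
    obtain i l where z1e: "z1 = (i,l)" by (cases z1)
    obtain j l' where z2e: "z2 = (j,l')" by (cases z2)
    have i: "i \<in> {..<k}" and l: "l \<in> Ln" using z1 z1e by auto
    have j: "j \<in> {..<k}" and l': "l' \<in> Ln" using z2 z2e by auto
    have eq: "l \<otimes>\<^bsub>G\<^esub> inv\<^bsub>G\<^esub> (t i) = l' \<otimes>\<^bsub>G\<^esub> inv\<^bsub>G\<^esub> (t j)" using eqz z1e z2e by simp
    have lG: "l \<in> carrier G" "l' \<in> carrier G" using l l' LnG by auto
    have "inv\<^bsub>G\<^esub> l' \<otimes>\<^bsub>G\<^esub> l = inv\<^bsub>G\<^esub> (t j) \<otimes>\<^bsub>G\<^esub> t i"
    proof -
      have "inv\<^bsub>G\<^esub> l' \<otimes>\<^bsub>G\<^esub> (l \<otimes>\<^bsub>G\<^esub> inv\<^bsub>G\<^esub> (t i)) \<otimes>\<^bsub>G\<^esub> t i = inv\<^bsub>G\<^esub> l' \<otimes>\<^bsub>G\<^esub> (l' \<otimes>\<^bsub>G\<^esub> inv\<^bsub>G\<^esub> (t j)) \<otimes>\<^bsub>G\<^esub> t i"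
        using eq by simp
      then show ?thesis using lG i j tG by (simp add: gsimps)
    qed
    moreover have "inv\<^bsub>G\<^esub> l' \<otimes>\<^bsub>G\<^esub> l \<in> L" using Lmult[OF Linv[OF LnL[OF l']] LnL[OF l]] .
    ultimately have ij: "j = i" using t_dist i j by auto
    then show "z1 = z2" using eq lG i tG z1e z2e by simp
  qed
  show "(\<lambda>(i,l). l \<otimes>\<^bsub>G\<^esub> inv\<^bsub>G\<^esub> (t i)) ` ({..<k} \<times> Ln) = Nn"
  proof
    show "(\<lambda>(i,l). l \<otimes>\<^bsub>G\<^esub> inv\<^bsub>G\<^esub> (t i)) ` ({..<k} \<times> Ln) \<subseteq> Nn"
      using Nmult LnN Ninv tN by auto
    show "Nn \<subseteq> (\<lambda>(i,l). l \<otimes>\<^bsub>G\<^esub> inv\<^bsub>G\<^esub> (t i)) ` ({..<k} \<times> Ln)"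
    proof
      fix y assume y: "y \<in> Nn"
      from t_cover Ninv[OF y] obtain i where i: "i < k" and l0: "inv\<^bsub>G\<^esub> (t i) \<otimes>\<^bsub>G\<^esub> inv\<^bsub>G\<^esub> y \<in> L" by blast
      have l0N: "inv\<^bsub>G\<^esub> (t i) \<otimes>\<^bsub>G\<^esub> inv\<^bsub>G\<^esub> y \<in> Nn" using Nmult[OF Ninv[OF tN[OF i]] Ninv[OF y]] .
      have "y \<otimes>\<^bsub>G\<^esub> t i = inv\<^bsub>G\<^esub> (inv\<^bsub>G\<^esub> (t i) \<otimes>\<^bsub>G\<^esub> inv\<^bsub>G\<^esub> y)" using y i NG tG by (simp add: gsimps)
      then have lL: "y \<otimes>\<^bsub>G\<^esub> t i \<in> Ln" using Linv[OF l0] Ninv[OF l0N] Ln_def by auto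
      have "y = (y \<otimes>\<^bsub>G\<^esub> t i) \<otimes>\<^bsub>G\<^esub> inv\<^bsub>G\<^esub> (t i)" using y i NG tG by (simp add: gsimps)
      then show "y \<in> (\<lambda>(i,l). l \<otimes>\<^bsub>G\<^esub> inv\<^bsub>G\<^esub> (t i)) ` ({..<k} \<times> Ln)" using i lL by force
    qed
  qed
qed

lemma induce_eq: assumes x: "x \<in> Nn"
  shows "induce G Ln Nn \<theta>t x = mat_trace (Pm x)"
proof -
  have xG: "x \<in> carrier G" using NG[OF x] .
  have "(\<Sum>y\<in>Nn. (if y \<otimes>\<^bsub>G\<^esub> x \<otimes>\<^bsub>G\<^esub> inv\<^bsub>G\<^esub> y \<in> Ln then \<theta>t (y \<otimes>\<^bsub>G\<^esub> x \<otimes>\<^bsub>G\<^esub> inv\<^bsub>G\<^esub> y) else 0))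
      = (\<Sum>y\<in>Nn. \<theta>t (y \<otimes>\<^bsub>G\<^esub> x \<otimes>\<^bsub>G\<^esub> inv\<^bsub>G\<^esub> y))"
    by (intro sum.cong refl) (use \<theta>t_aff in auto)
  also have "\<dots> = (\<Sum>z\<in>{..<k} \<times> Ln. \<theta>t ((\<lambda>(i,l). l \<otimes>\<^bsub>G\<^esub> inv\<^bsub>G\<^esub> (t i)) z \<otimes>\<^bsub>G\<^esub> x \<otimes>\<^bsub>G\<^esub> inv\<^bsub>G\<^esub> ((\<lambda>(i,l). l \<otimes>\<^bsub>G\<^esub> inv\<^bsub>G\<^esub> (t i)) z)))"
    by (rule sum.reindex_bij_betw[OF bij_NL, symmetric])
  also have "\<dots> = (\<Sum>i<k. \<Sum>l\<in>Ln. \<theta>t (inv\<^bsub>G\<^esub> (t i) \<otimes>\<^bsub>G\<^esub> (x \<otimes>\<^bsub>G\<^esub> t i)))"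
  proof -
    have "\<theta>t (l \<otimes>\<^bsub>G\<^esub> inv\<^bsub>G\<^esub> (t i) \<otimes>\<^bsub>G\<^esub> x \<otimes>\<^bsub>G\<^esub> inv\<^bsub>G\<^esub> (l \<otimes>\<^bsub>G\<^esub> inv\<^bsub>G\<^esub> (t i))) = \<theta>t (inv\<^bsub>G\<^esub> (t i) \<otimes>\<^bsub>G\<^esub> (x \<otimes>\<^bsub>G\<^esub> t i))"
      if i: "i < k" and l: "l \<in> Ln" for i l
    proof -
      define z where "z = inv\<^bsub>G\<^esub> (t i) \<otimes>\<^bsub>G\<^esub> (x \<otimes>\<^bsub>G\<^esub> t i)"
      have lG: "l \<in> carrier G" using l LnG by auto
      have zG: "z \<in> carrier G" unfolding z_def using i tG xG by simp
      have eq: "l \<otimes>\<^bsub>G\<^esub> inv\<^bsub>G\<^esub> (t i) \<otimes>\<^bsub>G\<^esub> x \<otimes>\<^bsub>G\<^esub> inv\<^bsub>G\<^esub> (l \<otimes>\<^bsub>G\<^esub> inv\<^bsub>G\<^esub> (t i)) = l \<otimes>\<^bsub>G\<^esub> z \<otimes>\<^bsub>G\<^esub> inv\<^bsub>G\<^esub> l"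
        unfolding z_def using lG i tG xG by (simp add: gsimps)
      show ?thesis
      proof (cases "z \<in> Ln")
        case True
        then show ?thesis unfolding eq z_def[symmetric] using \<theta>t_inv LnL[OF l] by auto
      next
        case False
        have "l \<otimes>\<^bsub>G\<^esub> z \<otimes>\<^bsub>G\<^esub> inv\<^bsub>G\<^esub> l \<notin> Ln"
        proof
          assume c: "l \<otimes>\<^bsub>G\<^esub> z \<otimes>\<^bsub>G\<^esub> inv\<^bsub>G\<^esub> l \<in> Ln"
          have "z = inv\<^bsub>G\<^esub> l \<otimes>\<^bsub>G\<^esub> (l \<otimes>\<^bsub>G\<^esub> z \<otimes>\<^bsub>G\<^esub> inv\<^bsub>G\<^esub> l) \<otimes>\<^bsub>G\<^esub> inv\<^bsub>G\<^esub> (inv\<^bsub>G\<^esub> l)"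
            using lG zG by (simp add: gsimps)
          also have "\<dots> \<in> Ln" using \<theta>t_inv Ln_def c Linv[OF LnL[OF l]] LnN[OF l]
              Lmult Nmult Linv Ninv LnL LnN by (metis IntI)
          finally show False using False by simp
        qed
        then show ?thesis unfolding eq z_def[symmetric] using False \<theta>t_aff by simp
      qed
    qed
    then have "(\<Sum>z\<in>{..<k} \<times> Ln. \<theta>t ((\<lambda>(i,l). l \<otimes>\<^bsub>G\<^esub> inv\<^bsub>G\<^esub> (t i)) z \<otimes>\<^bsub>G\<^esub> x \<otimes>\<^bsub>G\<^esub> inv\<^bsub>G\<^esub> ((\<lambda>(i,l). l \<otimes>\<^bsub>G\<^esub> inv\<^bsub>G\<^esub> (t i)) z)))
       = (\<Sum>(i,l)\<in>{..<k} \<times> Ln. \<theta>t (inv\<^bsub>G\<^esub> (t i) \<otimes>\<^bsub>G\<^esub> (x \<otimes>\<^bsub>G\<^esub> t i)))"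
      by (intro sum.cong refl) auto
    also have "\<dots> = (\<Sum>i<k. \<Sum>l\<in>Ln. \<theta>t (inv\<^bsub>G\<^esub> (t i) \<otimes>\<^bsub>G\<^esub> (x \<otimes>\<^bsub>G\<^esub> t i)))"
      by (rule sum.cartesian_product[symmetric])
    finally show ?thesis .
  qed
  also have "\<dots> = of_nat (card Ln) * (\<Sum>i<k. \<theta>t (inv\<^bsub>G\<^esub> (t i) \<otimes>\<^bsub>G\<^esub> (x \<otimes>\<^bsub>G\<^esub> t i)))"
    by (simp add: sum_distrib_left)
  finally show ?thesis unfolding induce_def trace_Pm[OF x] using x Ln_card by simp
qed

lemma degree: "of_nat D = induce G Ln Nn \<theta>t \<one>\<^bsub>G\<^esub>"
  using induce_eq[OF None] Pm_one unfolding mat_trace_def by simp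

lemma induce_out: "x \<notin> Nn \<Longrightarrow> induce G Ln Nn \<theta>t x = 0"
  unfolding induce_def by simp

end


context indc begin

interpretation Gr: group G by (rule grp)

lemma k_pos: "k > 0" using t_cover None by auto
lemma D_pos: "D > 0" unfolding D_def using k_pos e_pos by simp

lemma Pm_rep: "is_rep G Nn D Pm"
  unfolding is_rep_def using Pm_one Pm_mult al_xn NinK by auto

lemma Pm_proj: "proj_rep G K Nn (induce G Ln Nn \<theta>t) Pm al"
  unfolding proj_rep_def
proof (intro exI[of _ D] conjI ballI allI)
  show "of_nat D = induce G Ln Nn \<theta>t \<one>\<^bsub>G\<^esub>" by (rule degree)
  show "Pm x \<in> carrier_mat D D" for x by simp
  show "invertible_mat (Pm x)" if "x \<in> K" for x using Pm_invertible[OF that] .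
  show "Pm x * Pm y = al x y \<cdot>\<^sub>m Pm (x \<otimes>\<^bsub>G\<^esub> y)" if "x \<in> K" "y \<in> K" for x y using Pm_mult that .
  show "is_rep G Nn D Pm" by (rule Pm_rep)
  show "affords Nn Pm (induce G Ln Nn \<theta>t)" unfolding affords_def using induce_eq induce_out by auto
  show "Pm (x \<otimes>\<^bsub>G\<^esub> n) = Pm x * Pm n" "Pm (n \<otimes>\<^bsub>G\<^esub> x) = Pm n * Pm x" if "x \<in> K" "n \<in> Nn" for x n
    using Pm_xn that by auto
qed

lemma Pm_scalar: assumes c: "c \<in> L" and comm: "\<forall>n\<in>Nn. c \<otimes>\<^bsub>G\<^esub> n = n \<otimes>\<^bsub>G\<^esub> c"
  and Pc: "Pt c = z \<cdot>\<^sub>m 1\<^sub>m d1"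
  shows "Pm c = z \<cdot>\<^sub>m 1\<^sub>m D"
proof -
  have d1: "d1 = e" using PtC[OF c] Pc by auto
  have cG: "c \<in> carrier G" using LG[OF c] .
  show ?thesis
  proof (rule eq_matI)
    fix p q assume "p < dim_row (z \<cdot>\<^sub>m 1\<^sub>m D)" "q < dim_col (z \<cdot>\<^sub>m 1\<^sub>m D)"
    then have p: "p < D" and q: "q < D" by auto
    have i: "p div e < k" "p mod e < e" and j: "q div e < k" "q mod e < e" using blk[OF p] blk[OF q] by auto
    have ct: "c \<otimes>\<^bsub>G\<^esub> t (q div e) = t (q div e) \<otimes>\<^bsub>G\<^esub> c" using comm tN j by auto
    have eq: "inv\<^bsub>G\<^esub> (t (p div e)) \<otimes>\<^bsub>G\<^esub> (c \<otimes>\<^bsub>G\<^esub> t (q div e)) = (inv\<^bsub>G\<^esub> (t (p div e)) \<otimes>\<^bsub>G\<^esub> t (q div e)) \<otimes>\<^bsub>G\<^esub> c"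
      unfolding ct using i j tG cG by (simp add: gsimps)
    show "Pm c $$ (p,q) = (z \<cdot>\<^sub>m 1\<^sub>m D) $$ (p,q)"
    proof (cases "p div e = q div e")
      case True
      have "p = q \<longleftrightarrow> p mod e = q mod e" using True by (metis div_mult_mod_eq)
      moreover have "inv\<^bsub>G\<^esub> (t (p div e)) \<otimes>\<^bsub>G\<^esub> t (q div e) \<otimes>\<^bsub>G\<^esub> c = c" using True j tG cG by simp
      ultimately show ?thesis using p q i j c Pc d1 unfolding Pm_entry[OF p q] eq Pt0_def by auto
    next
      case False
      then have nl: "inv\<^bsub>G\<^esub> (t (p div e)) \<otimes>\<^bsub>G\<^esub> t (q div e) \<notin> L" using t_dist i j by blast
      have "inv\<^bsub>G\<^esub> (t (p div e)) \<otimes>\<^bsub>G\<^esub> t (q div e) \<otimes>\<^bsub>G\<^esub> c \<notin> L"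
      proof
        assume "inv\<^bsub>G\<^esub> (t (p div e)) \<otimes>\<^bsub>G\<^esub> t (q div e) \<otimes>\<^bsub>G\<^esub> c \<in> L"
        then have "inv\<^bsub>G\<^esub> (t (p div e)) \<otimes>\<^bsub>G\<^esub> t (q div e) \<otimes>\<^bsub>G\<^esub> c \<otimes>\<^bsub>G\<^esub> inv\<^bsub>G\<^esub> c \<in> L"
          using Lmult Linv c by blast
        then show False using nl i j tG cG by (simp add: gsimps)
      qed
      moreover have "p \<noteq> q" using False by auto
      ultimately show ?thesis using p q i j unfolding Pm_entry[OF p q] eq Pt0_def by simp
    qed
  qed auto
qed

lemma centralizer_sub: assumes irr: "induce G Ln Nn \<theta>t \<in> Irr G Nn"
  shows "centralizer_in G K Nn \<subseteq> L"
proof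
  fix c assume "c \<in> centralizer_in G K Nn"
  then have c: "c \<in> K" and comm: "\<forall>n\<in>Nn. c \<otimes>\<^bsub>G\<^esub> n = n \<otimes>\<^bsub>G\<^esub> c" unfolding centralizer_in_def by auto
  have cG: "c \<in> carrier G" using KG[OF c] .
  show "c \<in> L"
  proof (rule ccontr)
    assume cL: "c \<notin> L"
    from irr obtain n0 R0 where R0: "irreducible_rep G Nn n0 R0" and aff: "affords Nn R0 (induce G Ln Nn \<theta>t)"
      unfolding Irr_def by auto
    have r0: "is_rep G Nn n0 R0" using R0 unfolding irreducible_rep_def by auto
    have "of_nat n0 = induce G Ln Nn \<theta>t \<one>\<^bsub>G\<^esub>"
      using aff r0 None unfolding affords_def is_rep_def mat_trace_def by simp
    then have "of_nat n0 = (of_nat D :: complex)" using degree by simp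
    then have n0: "n0 = D" by simp
    have fN: "finite Nn" using finite_subset[OF _ fin] NG by auto
    have tr: "\<forall>g\<in>Nn. mat_trace (Pm g) = mat_trace (R0 g)"
      using aff induce_eq unfolding affords_def by auto
    have cm: "\<forall>h\<in>Nn. Pm h * Pm c = Pm c * Pm h"
      using Pm_xn[OF c] comm by metis
    from equal_char_commutant[OF grp Nn fN R0[unfolded n0] Pm_rep tr Pm_carrier cm]
    obtain z where z: "Pm c = z \<cdot>\<^sub>m 1\<^sub>m D" by auto
    have "Pm c $$ (0,0) = 0"
    proof -
      have "0 div e < k" "0 mod e < e" using blk[OF D_pos] by auto
      moreover have "inv\<^bsub>G\<^esub> (t 0) \<otimes>\<^bsub>G\<^esub> (c \<otimes>\<^bsub>G\<^esub> t 0) = c"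
        using comm tN[OF k_pos] tG[OF k_pos] cG by (simp add: gsimps)
      ultimately show ?thesis unfolding Pm_entry[OF D_pos D_pos] Pt0_def using cL by simp
    qed
    then have "z = 0" using z D_pos by simp
    then have "Pm c = 0\<^sub>m D D" using z by auto
    then have "Pm c * ((1 / al c (inv\<^bsub>G\<^esub> c)) \<cdot>\<^sub>m Pm (inv\<^bsub>G\<^esub> c)) = 0\<^sub>m D D" by simp
    then have "(1\<^sub>m D :: complex mat) $$ (0,0) = 0\<^sub>m D D $$ (0,0)" using Pm_inverse(1)[OF c] by simp
    then show False using D_pos by simp
  qed
qed

lemma induce_invariant: assumes x: "x \<in> K" and n: "n \<in> Nn"
  shows "induce G Ln Nn \<theta>t (x \<otimes>\<^bsub>G\<^esub> n \<otimes>\<^bsub>G\<^esub> inv\<^bsub>G\<^esub> x) = induce G Ln Nn \<theta>t n"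
proof -
  define n' where "n' = x \<otimes>\<^bsub>G\<^esub> n \<otimes>\<^bsub>G\<^esub> inv\<^bsub>G\<^esub> x"
  have n': "n' \<in> Nn" unfolding n'_def using nrm x n by auto
  have xG: "x \<in> carrier G" using KG[OF x] .
  have nG: "n \<in> carrier G" using NG[OF n] .
  have "n' \<otimes>\<^bsub>G\<^esub> x = x \<otimes>\<^bsub>G\<^esub> n" unfolding n'_def using xG nG by (simp add: gsimps)
  then have eq: "Pm n' * Pm x = Pm x * Pm n" using Pm_xn[OF x n] Pm_xn[OF x n'] by metis
  define B where "B = (1 / al x (inv\<^bsub>G\<^esub> x)) \<cdot>\<^sub>m Pm (inv\<^bsub>G\<^esub> x)"
  have B: "B \<in> carrier_mat D D" unfolding B_def by simp
  have xB: "Pm x * B = 1\<^sub>m D" and Bx: "B * Pm x = 1\<^sub>m D" using Pm_inverse[OF x] unfolding B_def by auto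
  have "Pm n' = Pm n' * Pm x * B" using xB B by (simp add: assoc_mult_mat[OF Pm_carrier Pm_carrier B])
  also have "\<dots> = Pm x * (Pm n * B)" unfolding eq using B by (simp add: assoc_mult_mat[OF Pm_carrier Pm_carrier B])
  finally have "mat_trace (Pm n') = mat_trace (Pm x * (Pm n * B))" by simp
  also have "\<dots> = mat_trace (Pm n * B * Pm x)" by (rule mat_trace_comm[OF Pm_carrier mult_carrier_mat[OF Pm_carrier B]])
  also have "\<dots> = mat_trace (Pm n)" using Bx B by (simp add: assoc_mult_mat[OF Pm_carrier B Pm_carrier])
  finally show ?thesis using induce_eq n n' unfolding n'_def by simp
qed

end


lemma grp_cancel:
  assumes "group G" "x \<in> carrier G" "y \<in> carrier G"
  shows "inv\<^bsub>G\<^esub> x \<otimes>\<^bsub>G\<^esub> (x \<otimes>\<^bsub>G\<^esub> y) = y" "x \<otimes>\<^bsub>G\<^esub> (inv\<^bsub>G\<^esub> x \<otimes>\<^bsub>G\<^esub> y) = y"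
proof -
  interpret Gr: group G by (rule assms(1))
  show "inv\<^bsub>G\<^esub> x \<otimes>\<^bsub>G\<^esub> (x \<otimes>\<^bsub>G\<^esub> y) = y" "x \<otimes>\<^bsub>G\<^esub> (inv\<^bsub>G\<^esub> x \<otimes>\<^bsub>G\<^esub> y) = y"
    using assms by (simp_all add: Gr.m_assoc[symmetric])
qed

lemma transversal_exists:
  assumes grp: "group G" and fin: "finite (carrier G)" and Nn: "subgroup Nn G" and L: "subgroup L G"
  shows "\<exists>(k::nat) t. (\<forall>i<k. t i \<in> Nn) \<and> (\<forall>i<k. \<forall>j<k. inv\<^bsub>G\<^esub> (t i) \<otimes>\<^bsub>G\<^esub> t j \<in> L \<longrightarrow> i = j)
     \<and> (\<forall>n\<in>Nn. \<exists>i<k. inv\<^bsub>G\<^esub> (t i) \<otimes>\<^bsub>G\<^esub> n \<in> L)"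
proof -
  interpret Gr: group G by (rule grp)
  have NG: "x \<in> Nn \<Longrightarrow> x \<in> carrier G" for x using subgroup.mem_carrier[OF Nn] .
  have LG: "x \<in> L \<Longrightarrow> x \<in> carrier G" for x using subgroup.mem_carrier[OF L] .
  define cs where "cs n = {m \<in> Nn. inv\<^bsub>G\<^esub> m \<otimes>\<^bsub>G\<^esub> n \<in> L}" for n
  define f where "f n = (SOME m. m \<in> cs n)" for n
  have f: "f n \<in> Nn \<and> inv\<^bsub>G\<^esub> (f n) \<otimes>\<^bsub>G\<^esub> n \<in> L" if n: "n \<in> Nn" for n
  proof -
    have "n \<in> cs n" unfolding cs_def using n NG subgroup.one_closed[OF L] by simp
    then have "f n \<in> cs n" unfolding f_def by (rule someI)
    then show ?thesis unfolding cs_def by auto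
  qed
  have fsame: "f n = f n'" if n: "n \<in> Nn" and n': "n' \<in> Nn" and L1: "inv\<^bsub>G\<^esub> (f n) \<otimes>\<^bsub>G\<^esub> f n' \<in> L" for n n'
  proof -
    have a: "inv\<^bsub>G\<^esub> (f n) \<otimes>\<^bsub>G\<^esub> n \<in> L" and b: "inv\<^bsub>G\<^esub> (f n') \<otimes>\<^bsub>G\<^esub> n' \<in> L" using f n n' by auto
    have fG: "f n \<in> carrier G" "f n' \<in> carrier G" using f n n' NG by auto
    have "inv\<^bsub>G\<^esub> n \<otimes>\<^bsub>G\<^esub> n' = inv\<^bsub>G\<^esub> (inv\<^bsub>G\<^esub> (f n) \<otimes>\<^bsub>G\<^esub> n) \<otimes>\<^bsub>G\<^esub> ((inv\<^bsub>G\<^esub> (f n) \<otimes>\<^bsub>G\<^esub> f n') \<otimes>\<^bsub>G\<^esub> (inv\<^bsub>G\<^esub> (f n') \<otimes>\<^bsub>G\<^esub> n'))"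
      using fG n n' NG by (simp add: Gr.m_assoc Gr.inv_mult_group grp_cancel[OF grp])
    also have "\<dots> \<in> L" using subgroup.m_closed[OF L subgroup.m_inv_closed[OF L a] subgroup.m_closed[OF L L1 b]] .
    finally have nn: "inv\<^bsub>G\<^esub> n \<otimes>\<^bsub>G\<^esub> n' \<in> L" .
    have "cs n = cs n'"
    proof (rule Set.set_eqI)
      fix m show "m \<in> cs n \<longleftrightarrow> m \<in> cs n'"
      proof
      assume "m \<in> cs n"
      then have m: "m \<in> Nn" "inv\<^bsub>G\<^esub> m \<otimes>\<^bsub>G\<^esub> n \<in> L" unfolding cs_def by auto
      have "inv\<^bsub>G\<^esub> m \<otimes>\<^bsub>G\<^esub> n' = (inv\<^bsub>G\<^esub> m \<otimes>\<^bsub>G\<^esub> n) \<otimes>\<^bsub>G\<^esub> (inv\<^bsub>G\<^esub> n \<otimes>\<^bsub>G\<^esub> n')"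
        using m NG n n' by (simp add: Gr.m_assoc Gr.inv_mult_group grp_cancel[OF grp])
      also have "\<dots> \<in> L" using m nn subgroup.m_closed[OF L] by blast
      finally show "m \<in> cs n'" unfolding cs_def using m by auto
    next
      assume "m \<in> cs n'"
      then have m: "m \<in> Nn" "inv\<^bsub>G\<^esub> m \<otimes>\<^bsub>G\<^esub> n' \<in> L" unfolding cs_def by auto
      have "inv\<^bsub>G\<^esub> m \<otimes>\<^bsub>G\<^esub> n = (inv\<^bsub>G\<^esub> m \<otimes>\<^bsub>G\<^esub> n') \<otimes>\<^bsub>G\<^esub> inv\<^bsub>G\<^esub> (inv\<^bsub>G\<^esub> n \<otimes>\<^bsub>G\<^esub> n')"
        using m NG n n' by (simp add: Gr.m_assoc Gr.inv_mult_group grp_cancel[OF grp])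
      also have "\<dots> \<in> L" using m nn subgroup.m_closed[OF L] subgroup.m_inv_closed[OF L] by blast
      finally show "m \<in> cs n" unfolding cs_def using m by auto
    qed
    qed
    then show ?thesis unfolding f_def by simp
  qed
  define T where "T = f ` Nn"
  have finT: "finite T" unfolding T_def using finite_subset[OF _ fin] NG by auto
  from ex_bij_betw_nat_finite[OF finT] obtain t where t: "bij_betw t {0..<card T} T" by blast
  show ?thesis
  proof (rule exI[where x="card T"], rule exI[where x=t], intro conjI allI impI ballI)
    fix i assume i: "i < card T"
    then have "t i \<in> T" using t unfolding bij_betw_def by auto
    then show "t i \<in> Nn" unfolding T_def using f by auto
  next
    fix i j assume i: "i < card T" and j: "j < card T" and ij: "inv\<^bsub>G\<^esub> (t i) \<otimes>\<^bsub>G\<^esub> t j \<in> L"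
    have "t i \<in> T" "t j \<in> T" using t i j unfolding bij_betw_def by auto
    then obtain n n' where n: "n \<in> Nn" "t i = f n" and n': "n' \<in> Nn" "t j = f n'" unfolding T_def by auto
    have "t i = t j" using fsame[OF n(1) n'(1)] ij n n' by simp
    then show "i = j" using t i j unfolding bij_betw_def inj_on_def by auto
  next
    fix n assume n: "n \<in> Nn"
    have "f n \<in> T" unfolding T_def using n by auto
    moreover have "T = t ` {0..<card T}" using t by (simp add: bij_betw_def)
    ultimately have "f n \<in> t ` {0..<card T}" by simp
    then obtain i where i0: "i \<in> {0..<card T}" "f n = t i" by (rule imageE)
    then have i: "i < card T" "t i = f n" by auto
    then show "\<exists>i<card T. inv\<^bsub>G\<^esub> (t i) \<otimes>\<^bsub>G\<^esub> n \<in> L" using f[OF n] by auto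
  qed
qed

lemma induced_exists:
  fixes G :: "('a,'b) monoid_scheme"
  assumes grp: "group G" and fin: "finite (carrier G)"
    and K: "subgroup K G" and Nn: "subgroup Nn G" and NK: "Nn \<subseteq> K"
    and nrm: "\<forall>x\<in>K. \<forall>n\<in>Nn. x \<otimes>\<^bsub>G\<^esub> n \<otimes>\<^bsub>G\<^esub> inv\<^bsub>G\<^esub> x \<in> Nn"
    and L: "subgroup L G" and LK: "L \<subseteq> K"
    and KNL: "\<forall>x\<in>K. \<exists>n\<in>Nn. \<exists>l\<in>L. x = n \<otimes>\<^bsub>G\<^esub> l"
    and Ln_def: "Ln = L \<inter> Nn"
    and irrt: "\<theta>t \<in> Irr G Ln"
    and pr: "proj_rep G L Ln \<theta>t Pt \<alpha>t"
    and \<theta>t_inv: "\<forall>l\<in>L. \<forall>n\<in>Ln. \<theta>t (l \<otimes>\<^bsub>G\<^esub> n \<otimes>\<^bsub>G\<^esub> inv\<^bsub>G\<^esub> l) = \<theta>t n"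
  shows "\<exists>P \<alpha>. proj_rep G K Nn (induce G Ln Nn \<theta>t) P \<alpha>
     \<and> (\<forall>x\<in>K. \<forall>y\<in>K. \<forall>a\<in>L. \<forall>b\<in>L. inv\<^bsub>G\<^esub> x \<otimes>\<^bsub>G\<^esub> a \<in> Nn \<longrightarrow> inv\<^bsub>G\<^esub> y \<otimes>\<^bsub>G\<^esub> b \<in> Nn \<longrightarrow> \<alpha> x y = \<alpha>t a b)
     \<and> (\<forall>c\<in>L. \<forall>z d1. (\<forall>n\<in>Nn. c \<otimes>\<^bsub>G\<^esub> n = n \<otimes>\<^bsub>G\<^esub> c) \<longrightarrow> Pt c = z \<cdot>\<^sub>m 1\<^sub>m d1 \<longrightarrow> (\<exists>d'. P c = z \<cdot>\<^sub>m 1\<^sub>m d'))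
     \<and> (induce G Ln Nn \<theta>t \<in> Irr G Nn \<longrightarrow> centralizer_in G K Nn \<subseteq> L)
     \<and> (\<forall>x\<in>K. \<forall>n\<in>Nn. induce G Ln Nn \<theta>t (x \<otimes>\<^bsub>G\<^esub> n \<otimes>\<^bsub>G\<^esub> inv\<^bsub>G\<^esub> x) = induce G Ln Nn \<theta>t n)"
proof -
  interpret Gr: group G by (rule grp)
  from pr obtain e where e: "of_nat e = \<theta>t \<one>\<^bsub>G\<^esub>"
    and Pt_cinv: "\<forall>x\<in>L. Pt x \<in> carrier_mat e e \<and> invertible_mat (Pt x)"
    and Pt_mult: "\<forall>x\<in>L. \<forall>y\<in>L. Pt x * Pt y = \<alpha>t x y \<cdot>\<^sub>m Pt (x \<otimes>\<^bsub>G\<^esub> y)"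
    and Pt_rep: "is_rep G Ln e Pt" and Pt_aff: "affords Ln Pt \<theta>t"
    and Pt_xn: "\<forall>x\<in>L. \<forall>n\<in>Ln. Pt (x \<otimes>\<^bsub>G\<^esub> n) = Pt x * Pt n \<and> Pt (n \<otimes>\<^bsub>G\<^esub> x) = Pt n * Pt x"
    using pr unfolding proj_rep_def apply (elim exE conjE) apply (rule that) apply assumption+ done
  have one: "\<one>\<^bsub>G\<^esub> \<in> Ln" using Ln_def subgroup.one_closed[OF L] subgroup.one_closed[OF Nn] by auto
  have e_pos: "e > 0"
  proof -
    from irrt obtain n0 R0 where R0: "irreducible_rep G Ln n0 R0" and aff: "affords Ln R0 \<theta>t"
      unfolding Irr_def by auto
    have "of_nat n0 = \<theta>t \<one>\<^bsub>G\<^esub>" using aff R0 one unfolding affords_def irreducible_rep_def is_rep_def mat_trace_def by simp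
    then have "n0 = e" using e by (metis of_nat_eq_iff)
    then show ?thesis using R0 unfolding irreducible_rep_def by simp
  qed
  from transversal_exists[OF grp fin Nn L] obtain k :: nat and t where
    t_in: "\<forall>i<k. t i \<in> Nn" and t_dist: "\<forall>i<k. \<forall>j<k. inv\<^bsub>G\<^esub> (t i) \<otimes>\<^bsub>G\<^esub> t j \<in> L \<longrightarrow> i = j"
    and t_cover: "\<forall>n\<in>Nn. \<exists>i<k. inv\<^bsub>G\<^esub> (t i) \<otimes>\<^bsub>G\<^esub> n \<in> L"
    by blast
  have Pt_one: "Pt \<one>\<^bsub>G\<^esub> = 1\<^sub>m e" using Pt_rep unfolding is_rep_def by blast
  have \<theta>t_aff: "\<forall>x. \<theta>t x = (if x \<in> Ln then mat_trace (Pt x) else 0)" using Pt_aff unfolding affords_def .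
  have Pt_carr: "\<forall>x\<in>L. Pt x \<in> carrier_mat e e" using Pt_cinv by blast
  have Pt_inv: "\<forall>x\<in>L. invertible_mat (Pt x)" using Pt_cinv by blast
  interpret I: indc G K Nn L Ln \<theta>t Pt \<alpha>t e k t
    by (rule indc.intro[OF grp fin K Nn NK nrm L LK KNL Ln_def e_pos Pt_carr Pt_inv Pt_mult Pt_one Pt_xn
        \<theta>t_aff \<theta>t_inv t_in t_dist t_cover])
  show ?thesis
  proof (intro exI[of _ I.Pm] exI[of _ I.al] conjI)
    show "proj_rep G K Nn (induce G Ln Nn \<theta>t) I.Pm I.al" by (rule I.Pm_proj)
    show "\<forall>x\<in>K. \<forall>y\<in>K. \<forall>a\<in>L. \<forall>b\<in>L. inv\<^bsub>G\<^esub> x \<otimes>\<^bsub>G\<^esub> a \<in> Nn \<longrightarrow> inv\<^bsub>G\<^esub> y \<otimes>\<^bsub>G\<^esub> b \<in> Nn \<longrightarrow> I.al x y = \<alpha>t a b"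
      using I.al_well by blast
    show "\<forall>c\<in>L. \<forall>z d1. (\<forall>n\<in>Nn. c \<otimes>\<^bsub>G\<^esub> n = n \<otimes>\<^bsub>G\<^esub> c) \<longrightarrow> Pt c = z \<cdot>\<^sub>m 1\<^sub>m d1 \<longrightarrow> (\<exists>d'. I.Pm c = z \<cdot>\<^sub>m 1\<^sub>m d')"
      using I.Pm_scalar by blast
    show "induce G Ln Nn \<theta>t \<in> Irr G Nn \<longrightarrow> centralizer_in G K Nn \<subseteq> L" using I.centralizer_sub by blast
    show "\<forall>x\<in>K. \<forall>n\<in>Nn. induce G Ln Nn \<theta>t (x \<otimes>\<^bsub>G\<^esub> n \<otimes>\<^bsub>G\<^esub> inv\<^bsub>G\<^esub> x) = induce G Ln Nn \<theta>t n"
      using I.induce_invariant by blast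
  qed
qed



theorem lemma2p1:
  fixes G :: "('a,'b) monoid_scheme"
    and N Gt H :: "'a set"
    and \<theta>t \<phi>t :: "'a \<Rightarrow> complex"
  assumes "group G" and "finite (carrier G)"
    and "N \<lhd> G" and "subgroup Gt G" and "subgroup H G"
    and "carrier G = N <#>\<^bsub>G\<^esub> H"
    and "H = (Gt \<inter> H) <#>\<^bsub>G\<^esub> (N \<inter> H)"
    and "centralizer_in G (carrier G) N \<subseteq> H"
    and "\<theta>t \<in> Irr G (Gt \<inter> N)" and "\<phi>t \<in> Irr G (Gt \<inter> (N \<inter> H))"
    and "induce G (Gt \<inter> N) N \<theta>t \<in> Irr G N"
    and "induce G (Gt \<inter> (N \<inter> H)) (N \<inter> H) \<phi>t \<in> Irr G (N \<inter> H)"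
    and "ge_c G Gt (Gt \<inter> N) \<theta>t (Gt \<inter> H) (Gt \<inter> (N \<inter> H)) \<phi>t"
    and "\<forall>J. subgroup J G \<and> N \<subseteq> J \<longrightarrow>
           bij_betw (induce G (J \<inter> Gt) J)
             (Irr_over G (J \<inter> Gt) (Gt \<inter> N) \<theta>t) (Irr_over G J N (induce G (Gt \<inter> N) N \<theta>t)) \<and>
           bij_betw (induce G ((J \<inter> Gt) \<inter> H) (J \<inter> H))
             (Irr_over G ((J \<inter> Gt) \<inter> H) (Gt \<inter> (N \<inter> H)) \<phi>t)
             (Irr_over G (J \<inter> H) (N \<inter> H) (induce G (Gt \<inter> (N \<inter> H)) (N \<inter> H) \<phi>t))"
  shows "ge_c G (carrier G) N (induce G (Gt \<inter> N) N \<theta>t) H (N \<inter> H) (induce G (Gt \<inter> (N \<inter> H)) (N \<inter> H) \<phi>t)"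
proof -
  note grp = assms(1) and fin = assms(2) and nN = assms(3) and Gt = assms(4) and H = assms(5)
    and GNH = assms(6) and HGM = assms(7) and cent = assms(8) and irr\<theta>t = assms(9) and irr\<phi>t = assms(10)
    and irr\<theta> = assms(11) and irr\<phi> = assms(12) and gec = assms(13)
  interpret Gr: group G by (rule grp)
  have N: "subgroup N G" using normal_imp_subgroup[OF nN] .
  have nrmG: "\<forall>x\<in>carrier G. \<forall>n\<in>N. x \<otimes>\<^bsub>G\<^esub> n \<otimes>\<^bsub>G\<^esub> inv\<^bsub>G\<^esub> x \<in> N" using Gr.normal_inv_iff nN by blast
  have NG: "x \<in> N \<Longrightarrow> x \<in> carrier G" for x using subgroup.mem_carrier[OF N] .
  have GtG: "x \<in> Gt \<Longrightarrow> x \<in> carrier G" for x using subgroup.mem_carrier[OF Gt] .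
  have HG: "x \<in> H \<Longrightarrow> x \<in> carrier G" for x using subgroup.mem_carrier[OF H] .
  have GtH: "subgroup (Gt \<inter> H) G" using Gr.subgroups_Inter_pair[OF Gt H] .
  have NH: "subgroup (N \<inter> H) G" using Gr.subgroups_Inter_pair[OF N H] .
  from gec have ct1: "char_triple G Gt (Gt \<inter> N) \<theta>t" and ct2: "char_triple G (Gt \<inter> H) (Gt \<inter> (N \<inter> H)) \<phi>t"
    and centt: "centralizer_in G Gt (Gt \<inter> N) \<subseteq> Gt \<inter> H"
    unfolding ge_c_def by auto
  from gec obtain Pt \<alpha>t Pt' \<alpha>t' where prt: "proj_rep G Gt (Gt \<inter> N) \<theta>t Pt \<alpha>t"
    and prt': "proj_rep G (Gt \<inter> H) (Gt \<inter> (N \<inter> H)) \<phi>t Pt' \<alpha>t'"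
    and aeq: "\<forall>x\<in>Gt \<inter> H. \<forall>y\<in>Gt \<inter> H. \<alpha>t x y = \<alpha>t' x y"
    and sc: "\<forall>c\<in>centralizer_in G Gt (Gt \<inter> N). \<exists>z d d'. Pt c = z \<cdot>\<^sub>m 1\<^sub>m d \<and> Pt' c = z \<cdot>\<^sub>m 1\<^sub>m d'"
    unfolding ge_c_def by blast
  have inv1: "\<forall>l\<in>Gt. \<forall>n\<in>Gt \<inter> N. \<theta>t (l \<otimes>\<^bsub>G\<^esub> n \<otimes>\<^bsub>G\<^esub> inv\<^bsub>G\<^esub> l) = \<theta>t n"
    using ct1 unfolding char_triple_def by blast
  have inv2: "\<forall>l\<in>Gt \<inter> H. \<forall>n\<in>Gt \<inter> (N \<inter> H). \<phi>t (l \<otimes>\<^bsub>G\<^esub> n \<otimes>\<^bsub>G\<^esub> inv\<^bsub>G\<^esub> l) = \<phi>t n"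
    using ct2 unfolding char_triple_def by blast
  have Hdec: "\<exists>g\<in>Gt \<inter> H. \<exists>m\<in>N \<inter> H. x = g \<otimes>\<^bsub>G\<^esub> m" if x: "x \<in> H" for x
    using x HGM unfolding set_mult_def by blast
  have KNL1: "\<forall>x\<in>carrier G. \<exists>n\<in>N. \<exists>l\<in>Gt. x = n \<otimes>\<^bsub>G\<^esub> l"
  proof
    fix x assume "x \<in> carrier G"
    then obtain n h where n: "n \<in> N" and h: "h \<in> H" and xe: "x = n \<otimes>\<^bsub>G\<^esub> h"
      using GNH unfolding set_mult_def by blast
    from Hdec[OF h] obtain g m where g: "g \<in> Gt \<inter> H" and m: "m \<in> N \<inter> H" and he: "h = g \<otimes>\<^bsub>G\<^esub> m" by blast
    have gG: "g \<in> carrier G" and mG: "m \<in> carrier G" and nG: "n \<in> carrier G" using g m n GtG NG by auto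
    have c: "g \<otimes>\<^bsub>G\<^esub> m \<otimes>\<^bsub>G\<^esub> inv\<^bsub>G\<^esub> g \<in> N" using nrmG gG m by auto
    have "x = (n \<otimes>\<^bsub>G\<^esub> (g \<otimes>\<^bsub>G\<^esub> m \<otimes>\<^bsub>G\<^esub> inv\<^bsub>G\<^esub> g)) \<otimes>\<^bsub>G\<^esub> g"
      unfolding xe he using gG mG nG by (simp add: Gr.m_assoc)
    moreover have "n \<otimes>\<^bsub>G\<^esub> (g \<otimes>\<^bsub>G\<^esub> m \<otimes>\<^bsub>G\<^esub> inv\<^bsub>G\<^esub> g) \<in> N" using subgroup.m_closed[OF N n c] .
    ultimately show "\<exists>n\<in>N. \<exists>l\<in>Gt. x = n \<otimes>\<^bsub>G\<^esub> l" using g by blast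
  qed
  have KNL2: "\<forall>x\<in>H. \<exists>n\<in>N \<inter> H. \<exists>l\<in>Gt \<inter> H. x = n \<otimes>\<^bsub>G\<^esub> l"
  proof
    fix x assume x: "x \<in> H"
    from Hdec[OF x] obtain g m where g: "g \<in> Gt \<inter> H" and m: "m \<in> N \<inter> H" and xe: "x = g \<otimes>\<^bsub>G\<^esub> m" by blast
    have gG: "g \<in> carrier G" and mG: "m \<in> carrier G" using g m GtG NG by auto
    have c: "g \<otimes>\<^bsub>G\<^esub> m \<otimes>\<^bsub>G\<^esub> inv\<^bsub>G\<^esub> g \<in> N \<inter> H"
      using nrmG gG m g subgroup.m_closed[OF H] subgroup.m_inv_closed[OF H] by auto
    have "x = (g \<otimes>\<^bsub>G\<^esub> m \<otimes>\<^bsub>G\<^esub> inv\<^bsub>G\<^esub> g) \<otimes>\<^bsub>G\<^esub> g"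
      unfolding xe using gG mG by (simp add: Gr.m_assoc)
    then show "\<exists>n\<in>N \<inter> H. \<exists>l\<in>Gt \<inter> H. x = n \<otimes>\<^bsub>G\<^esub> l" using g c by blast
  qed
  have nrm2: "\<forall>x\<in>H. \<forall>n\<in>N \<inter> H. x \<otimes>\<^bsub>G\<^esub> n \<otimes>\<^bsub>G\<^esub> inv\<^bsub>G\<^esub> x \<in> N \<inter> H"
    using nrmG HG subgroup.m_closed[OF H] subgroup.m_inv_closed[OF H] by auto
  from induced_exists[OF grp fin Gr.subgroup_self N _ nrmG Gt _ KNL1 _ irr\<theta>t prt inv1]
  obtain P \<alpha> where pr1: "proj_rep G (carrier G) N (induce G (Gt \<inter> N) N \<theta>t) P \<alpha>"
    and a1: "\<forall>x\<in>carrier G. \<forall>y\<in>carrier G. \<forall>a\<in>Gt. \<forall>b\<in>Gt. inv\<^bsub>G\<^esub> x \<otimes>\<^bsub>G\<^esub> a \<in> N \<longrightarrow> inv\<^bsub>G\<^esub> y \<otimes>\<^bsub>G\<^esub> b \<in> N \<longrightarrow> \<alpha> x y = \<alpha>t a b"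
    and b1: "\<forall>c\<in>Gt. \<forall>z d1. (\<forall>n\<in>N. c \<otimes>\<^bsub>G\<^esub> n = n \<otimes>\<^bsub>G\<^esub> c) \<longrightarrow> Pt c = z \<cdot>\<^sub>m 1\<^sub>m d1 \<longrightarrow> (\<exists>d'. P c = z \<cdot>\<^sub>m 1\<^sub>m d')"
    and c1: "induce G (Gt \<inter> N) N \<theta>t \<in> Irr G N \<longrightarrow> centralizer_in G (carrier G) N \<subseteq> Gt"
    and d1: "\<forall>x\<in>carrier G. \<forall>n\<in>N. induce G (Gt \<inter> N) N \<theta>t (x \<otimes>\<^bsub>G\<^esub> n \<otimes>\<^bsub>G\<^esub> inv\<^bsub>G\<^esub> x) = induce G (Gt \<inter> N) N \<theta>t n"
    using NG GtG by blast
  from induced_exists[OF grp fin H NH _ nrm2 GtH _ KNL2 _ irr\<phi>t prt' inv2]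
  obtain P' \<alpha>' where pr2: "proj_rep G H (N \<inter> H) (induce G (Gt \<inter> (N \<inter> H)) (N \<inter> H) \<phi>t) P' \<alpha>'"
    and a2: "\<forall>x\<in>H. \<forall>y\<in>H. \<forall>a\<in>Gt \<inter> H. \<forall>b\<in>Gt \<inter> H. inv\<^bsub>G\<^esub> x \<otimes>\<^bsub>G\<^esub> a \<in> N \<inter> H \<longrightarrow> inv\<^bsub>G\<^esub> y \<otimes>\<^bsub>G\<^esub> b \<in> N \<inter> H \<longrightarrow> \<alpha>' x y = \<alpha>t' a b"
    and b2: "\<forall>c\<in>Gt \<inter> H. \<forall>z d1. (\<forall>n\<in>N \<inter> H. c \<otimes>\<^bsub>G\<^esub> n = n \<otimes>\<^bsub>G\<^esub> c) \<longrightarrow> Pt' c = z \<cdot>\<^sub>m 1\<^sub>m d1 \<longrightarrow> (\<exists>d'. P' c = z \<cdot>\<^sub>m 1\<^sub>m d')"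
    and d2: "\<forall>x\<in>H. \<forall>n\<in>N \<inter> H. induce G (Gt \<inter> (N \<inter> H)) (N \<inter> H) \<phi>t (x \<otimes>\<^bsub>G\<^esub> n \<otimes>\<^bsub>G\<^esub> inv\<^bsub>G\<^esub> x) = induce G (Gt \<inter> (N \<inter> H)) (N \<inter> H) \<phi>t n"
    by blast
  have ctG: "char_triple G (carrier G) N (induce G (Gt \<inter> N) N \<theta>t)"
    unfolding char_triple_def using Gr.subgroup_self nN irr\<theta> d1 by simp
  have nH: "normal (N \<inter> H) (G\<lparr>carrier := H\<rparr>)"
  proof -
    have gH: "group (G\<lparr>carrier := H\<rparr>)" using subgroup.subgroup_is_group[OF H grp] .
    have sH: "subgroup (N \<inter> H) (G\<lparr>carrier := H\<rparr>)" using Gr.subgroup_incl[OF NH H] by auto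
    show ?thesis unfolding group.normal_inv_iff[OF gH] using sH nrm2 Gr.m_inv_consistent[OF H] by simp
  qed
  have ctH: "char_triple G H (N \<inter> H) (induce G (Gt \<inter> (N \<inter> H)) (N \<inter> H) \<phi>t)"
    unfolding char_triple_def using H nH irr\<phi> d2 by simp
  have aH: "\<forall>x\<in>H. \<forall>y\<in>H. \<alpha> x y = \<alpha>' x y"
  proof (intro ballI)
    fix x y assume x: "x \<in> H" and y: "y \<in> H"
    have rep: "\<exists>g\<in>Gt \<inter> H. inv\<^bsub>G\<^esub> x \<otimes>\<^bsub>G\<^esub> g \<in> N \<inter> H" if x: "x \<in> H" for x
    proof -
      from Hdec[OF x] obtain g m where g: "g \<in> Gt \<inter> H" and m: "m \<in> N \<inter> H" and xe: "x = g \<otimes>\<^bsub>G\<^esub> m" by blast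
      have gG: "g \<in> carrier G" and mG: "m \<in> carrier G" using g m GtG NG by auto
      have "inv\<^bsub>G\<^esub> x \<otimes>\<^bsub>G\<^esub> g = inv\<^bsub>G\<^esub> m" unfolding xe using gG mG
        by (simp add: Gr.inv_mult_group Gr.m_assoc)
      moreover have "inv\<^bsub>G\<^esub> m \<in> N \<inter> H" using m subgroup.m_inv_closed[OF NH] by blast
      ultimately have "inv\<^bsub>G\<^esub> x \<otimes>\<^bsub>G\<^esub> g \<in> N \<inter> H" by simp
      then show ?thesis using g by blast
    qed
    obtain gx where gx: "gx \<in> Gt \<inter> H" "inv\<^bsub>G\<^esub> x \<otimes>\<^bsub>G\<^esub> gx \<in> N \<inter> H" using rep[OF x] by blast
    obtain gy where gy: "gy \<in> Gt \<inter> H" "inv\<^bsub>G\<^esub> y \<otimes>\<^bsub>G\<^esub> gy \<in> N \<inter> H" using rep[OF y] by blast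
    have "\<alpha> x y = \<alpha>t gx gy" using a1 x y HG gx gy by blast
    also have "\<dots> = \<alpha>t' gx gy" using aeq gx gy by blast
    also have "\<dots> = \<alpha>' x y" using a2 x y gx gy by metis
    finally show "\<alpha> x y = \<alpha>' x y" .
  qed
  have scal: "\<forall>c\<in>centralizer_in G (carrier G) N. \<exists>z d d'. P c = z \<cdot>\<^sub>m 1\<^sub>m d \<and> P' c = z \<cdot>\<^sub>m 1\<^sub>m d'"
  proof
    fix c assume c: "c \<in> centralizer_in G (carrier G) N"
    have cGt: "c \<in> Gt" using c c1 irr\<theta> by blast
    have cH: "c \<in> H" using c cent by blast
    have comm: "\<forall>n\<in>N. c \<otimes>\<^bsub>G\<^esub> n = n \<otimes>\<^bsub>G\<^esub> c" using c unfolding centralizer_in_def by blast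
    have "c \<in> centralizer_in G Gt (Gt \<inter> N)" using cGt comm unfolding centralizer_in_def by blast
    then obtain z d d' where z: "Pt c = z \<cdot>\<^sub>m 1\<^sub>m d" "Pt' c = z \<cdot>\<^sub>m 1\<^sub>m d'" using sc by blast
    obtain D1 where "P c = z \<cdot>\<^sub>m 1\<^sub>m D1" using b1 cGt comm z(1) by blast
    moreover obtain D2 where "P' c = z \<cdot>\<^sub>m 1\<^sub>m D2" using b2 cGt cH comm z(2) by blast
    ultimately show "\<exists>z d d'. P c = z \<cdot>\<^sub>m 1\<^sub>m d \<and> P' c = z \<cdot>\<^sub>m 1\<^sub>m d'" by blast
  qed
  show ?thesis unfolding ge_c_def
    using ctG ctH H GNH cent pr1 pr2 aH scal subgroup.subset[OF H] by blast
qed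


end
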